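(* Let $\mathcal S=(\mathcal P,\mathcal L)$ be a linear space with $v$ points and constant line size $k$, $2<k<v$; let $G\le\mathrm{Aut}(\mathcal S)$ be transitive on lines, and let $\mathfrak C$ be a non-trivial $G$-invariant partition of $\mathcal P$ with $d$ classes of size $c$ which is $G$-normal and minimal. Let $K:=G_{(\mathfrak C)}$, $S:=\mathrm{Soc}(K)$, $X:=C_G(K)$ and $Y:=C_G(S)$. Then: (a) either (i) $Y\cap K=1$ and $S$ is non-abelian, or (ii) $Y\cap K=S$ and $S$ is elementary abelian; (b) either (i) $X\cap K=1$, or (ii) $X\cap K=K=S$ and $S$ is elementary abelian; (c) if in addition $\mathfrak C$ is maximal, and there is a non-trivial normal subgroup $N$ of $G$ which is intransitive on $\mathcal P$ and satisfies $N\cap S=1$, then there is a second $G$-normal partition $\mathfrak C'$ of $\mathcal P$ with $c$ classes of size $d$ such that $|C\cap C'|=1$ for all $C\in\mathfrak C$, $C'\in\mathfrak C'$.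
   Context: A linear space: a finite set $\mathcal P$ of points and a set $\mathcal L$ of subsets (lines) such that any two distinct points lie on exactly one line and each line has at least two points. $G_{(\mathfrak C)}$ is the kernel of the action of $G$ on $\mathfrak C$. A $G$-invariant partition is $G$-normal if this kernel is transitive on each class; minimal (resp. maximal) if no non-trivial $G$-invariant partition strictly refines it (resp. is strictly coarser than it). $\mathrm{Soc}$ denotes the socle and $C_G(\cdot)$ the centraliser in $G$. *)

theory Defs
  imports "HOL-Algebra.Algebra"
begin

definition linear_space :: "'a set \<Rightarrow> 'a set set \<Rightarrow> bool" where
  "linear_space P L \<longleftrightarrow> finite P \<and> (\<forall>l\<in>L. l \<subseteq> P \<and> 2 \<le> card l) \<and>
     (\<forall>x\<in>P. \<forall>y\<in>P. x \<noteq> y \<longrightarrow> (\<exists>!l. l \<in> L \<and> x \<in> l \<and> y \<in> l))"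

text \<open>Permutation groups on P: subgroups of the group of (extensional) bijections of P.\<close>

abbreviation Sym :: "'a set \<Rightarrow> ('a \<Rightarrow> 'a) monoid" where
  "Sym P \<equiv> BijGroup P"

abbreviation subgrp :: "'a set \<Rightarrow> ('a \<Rightarrow> 'a) set \<Rightarrow> ('a \<Rightarrow> 'a) monoid" where
  "subgrp P H \<equiv> (BijGroup P)\<lparr>carrier := H\<rparr>"

definition aut_group :: "'a set \<Rightarrow> 'a set set \<Rightarrow> ('a \<Rightarrow> 'a) set \<Rightarrow> bool" where
  "aut_group P L G \<longleftrightarrow> subgroup G (Sym P) \<and> (\<forall>g\<in>G. (\<lambda>l. g ` l) ` L = L)"

definition line_transitive :: "'a set set \<Rightarrow> ('a \<Rightarrow> 'a) set \<Rightarrow> bool" where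
  "line_transitive L G \<longleftrightarrow> (\<forall>l\<in>L. \<forall>m\<in>L. \<exists>g\<in>G. g ` l = m)"

definition is_partition :: "'a set \<Rightarrow> 'a set set \<Rightarrow> bool" where
  "is_partition P Q \<longleftrightarrow> (\<forall>A\<in>Q. A \<noteq> {}) \<and> \<Union>Q = P \<and>
     (\<forall>A\<in>Q. \<forall>B\<in>Q. A \<noteq> B \<longrightarrow> A \<inter> B = {})"

definition nontrivial_partition :: "'a set \<Rightarrow> 'a set set \<Rightarrow> bool" where
  "nontrivial_partition P Q \<longleftrightarrow> is_partition P Q \<and> Q \<noteq> {P} \<and> Q \<noteq> (\<lambda>x. {x}) ` P"

definition invariant_partition :: "'a set \<Rightarrow> ('a \<Rightarrow> 'a) set \<Rightarrow> 'a set set \<Rightarrow> bool" where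
  "invariant_partition P G Q \<longleftrightarrow> is_partition P Q \<and> (\<forall>g\<in>G. \<forall>A\<in>Q. g ` A \<in> Q)"

definition kernel_on :: "('a \<Rightarrow> 'a) set \<Rightarrow> 'a set set \<Rightarrow> ('a \<Rightarrow> 'a) set" where
  "kernel_on G Q = {g\<in>G. \<forall>A\<in>Q. g ` A = A}"

definition normal_partition :: "'a set \<Rightarrow> ('a \<Rightarrow> 'a) set \<Rightarrow> 'a set set \<Rightarrow> bool" where
  "normal_partition P G Q \<longleftrightarrow> invariant_partition P G Q \<and>
     (\<forall>A\<in>Q. \<forall>x\<in>A. \<forall>y\<in>A. \<exists>g\<in>kernel_on G Q. g x = y)"

definition refines :: "'a set set \<Rightarrow> 'a set set \<Rightarrow> bool" where
  "refines D Q \<longleftrightarrow> (\<forall>A\<in>D. \<exists>B\<in>Q. A \<subseteq> B)"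

definition minimal_partition :: "'a set \<Rightarrow> ('a \<Rightarrow> 'a) set \<Rightarrow> 'a set set \<Rightarrow> bool" where
  "minimal_partition P G Q \<longleftrightarrow> invariant_partition P G Q \<and>
     \<not> (\<exists>D. invariant_partition P G D \<and> nontrivial_partition P D \<and> refines D Q \<and> D \<noteq> Q)"

definition maximal_partition :: "'a set \<Rightarrow> ('a \<Rightarrow> 'a) set \<Rightarrow> 'a set set \<Rightarrow> bool" where
  "maximal_partition P G Q \<longleftrightarrow> invariant_partition P G Q \<and>
     \<not> (\<exists>D. invariant_partition P G D \<and> nontrivial_partition P D \<and> refines Q D \<and> D \<noteq> Q)"

definition transitive_on :: "('a \<Rightarrow> 'a) set \<Rightarrow> 'a set \<Rightarrow> bool" where
  "transitive_on H A \<longleftrightarrow> (\<forall>x\<in>A. \<forall>y\<in>A. \<exists>h\<in>H. h x = y)"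

definition minimal_normal :: "'a set \<Rightarrow> ('a \<Rightarrow> 'a) set \<Rightarrow> ('a \<Rightarrow> 'a) set \<Rightarrow> bool" where
  "minimal_normal P H M \<longleftrightarrow> M \<lhd> subgrp P H \<and> M \<noteq> {\<one>\<^bsub>Sym P\<^esub>} \<and>
     \<not> (\<exists>M'. M' \<lhd> subgrp P H \<and> M' \<noteq> {\<one>\<^bsub>Sym P\<^esub>} \<and> M' \<subset> M)"

definition socle :: "'a set \<Rightarrow> ('a \<Rightarrow> 'a) set \<Rightarrow> ('a \<Rightarrow> 'a) set" where
  "socle P H = generate (Sym P) (\<Union>{M. minimal_normal P H M})"

definition centraliser :: "'a set \<Rightarrow> ('a \<Rightarrow> 'a) set \<Rightarrow> ('a \<Rightarrow> 'a) set \<Rightarrow> ('a \<Rightarrow> 'a) set" where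
  "centraliser P G H = {g\<in>G. \<forall>h\<in>H. g \<otimes>\<^bsub>Sym P\<^esub> h = h \<otimes>\<^bsub>Sym P\<^esub> g}"

definition abelian_set :: "'a set \<Rightarrow> ('a \<Rightarrow> 'a) set \<Rightarrow> bool" where
  "abelian_set P H \<longleftrightarrow> (\<forall>x\<in>H. \<forall>y\<in>H. x \<otimes>\<^bsub>Sym P\<^esub> y = y \<otimes>\<^bsub>Sym P\<^esub> x)"

definition elementary_abelian :: "'a set \<Rightarrow> ('a \<Rightarrow> 'a) set \<Rightarrow> bool" where
  "elementary_abelian P H \<longleftrightarrow> abelian_set P H \<and>
     (\<exists>p::nat. Factorial_Ring.prime p \<and> (\<forall>x\<in>H. x [^]\<^bsub>Sym P\<^esub> p = \<one>\<^bsub>Sym P\<^esub>))"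

end

theory Submission
  imports Defs
begin


section \<open>Generic group theory\<close>

definition invsub :: "('g,'b) monoid_scheme \<Rightarrow> 'g set \<Rightarrow> 'g set \<Rightarrow> bool" where
  "invsub Gr K A \<longleftrightarrow> subgroup A Gr \<and> (\<forall>k\<in>K. \<forall>a\<in>A. k \<otimes>\<^bsub>Gr\<^esub> a \<otimes>\<^bsub>Gr\<^esub> inv\<^bsub>Gr\<^esub> k \<in> A)"

definition mininv :: "('g,'b) monoid_scheme \<Rightarrow> 'g set \<Rightarrow> 'g set \<Rightarrow> 'g set \<Rightarrow> bool" where
  "mininv Gr K W T \<longleftrightarrow> invsub Gr K T \<and> T \<subseteq> W \<and> T \<noteq> {\<one>\<^bsub>Gr\<^esub>} \<and>
     (\<forall>T'. invsub Gr K T' \<longrightarrow> T' \<noteq> {\<one>\<^bsub>Gr\<^esub>} \<longrightarrow> T' \<subseteq> T \<longrightarrow> T' = T)"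

context group begin

lemma inv_cancel_l: "x \<in> carrier G \<Longrightarrow> z \<in> carrier G \<Longrightarrow> inv x \<otimes> (x \<otimes> z) = z"
  by (simp add: m_assoc[symmetric])

lemma inv_cancel_l2: "x \<in> carrier G \<Longrightarrow> z \<in> carrier G \<Longrightarrow> x \<otimes> (inv x \<otimes> z) = z"
  by (simp add: m_assoc[symmetric])

lemma mininv_exists:
  assumes fin: "finite (carrier G)" and W: "invsub G K W" "W \<noteq> {\<one>}"
  shows "\<exists>T. mininv G K W T"
proof -
  let ?Q = "\<lambda>T. invsub G K T \<and> T \<noteq> {\<one>} \<and> T \<subseteq> W"
  have "?Q W" using W by auto
  then obtain T where T: "?Q T" and Tmin: "\<And>T'. ?Q T' \<Longrightarrow> card T \<le> card T'"
    using ex_has_least_nat[of ?Q W card] by blast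
  have finT: "finite T" using T fin unfolding invsub_def
    by (meson finite_subset subgroup.subset)
  show ?thesis
  proof (rule exI[of _ T], unfold mininv_def, intro conjI allI impI)
    fix T' assume "invsub G K T'" "T' \<noteq> {\<one>}" "T' \<subseteq> T"
    then have "?Q T'" using T by blast
    then show "T' = T" using Tmin[of T'] \<open>T' \<subseteq> T\<close> finT
      by (meson card_subset_eq finite_subset le_antisym card_mono)
  qed (use T in auto)
qed

lemma invsub_Int:
  assumes "invsub G K A" "invsub G K B" shows "invsub G K (A \<inter> B)"
  using assms unfolding invsub_def by (auto intro: subgroups_Inter_pair)

lemma invsub_generate:
  assumes K: "K \<subseteq> carrier G" and H: "H \<subseteq> carrier G"
    and cl: "\<And>k h. k \<in> K \<Longrightarrow> h \<in> H \<Longrightarrow> k \<otimes> h \<otimes> inv k \<in> H"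
  shows "invsub G K (generate G H)"
  unfolding invsub_def
proof (intro conjI ballI)
  show "subgroup (generate G H) G" using generate_is_subgroup[OF H] .
  fix k h assume k: "k \<in> K" and h: "h \<in> generate G H"
  have g: "k \<in> carrier G" using k K by auto
  from h show "k \<otimes> h \<otimes> inv k \<in> generate G H"
  proof (induct h rule: generate.induct)
    case one thus ?case using g generate.one by auto
  next
    case (incl h) show ?case using generate.incl[OF cl[OF k incl]] .
  next
    case (inv h)
    hence h: "h \<in> carrier G" using H by auto
    hence "inv (k \<otimes> h \<otimes> (inv k)) = k \<otimes> (inv h) \<otimes> (inv k)"
      using g by (simp add: inv_mult_group m_assoc)
    thus ?case
      using generate_m_inv_closed[OF H generate.incl[OF cl[OF k inv]]] by simp
  next
    case (eng h1 h2)
    note in_carrier = eng(1,3)[THEN generate_in_carrier[OF H]]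
    have "k \<otimes> (h1 \<otimes> h2) \<otimes> inv k = (k \<otimes> h1 \<otimes> inv k) \<otimes> (k \<otimes> h2 \<otimes> inv k)"
      using in_carrier g by (simp add: inv_solve_left m_assoc)
    thus ?case using generate.eng[OF eng(2,4)] by simp
  qed
qed

lemma comm_prod_subgroup:
  assumes A: "subgroup A G" and B: "subgroup B G"
    and comm: "\<And>a b. a \<in> A \<Longrightarrow> b \<in> B \<Longrightarrow> a \<otimes> b = b \<otimes> a"
  shows "subgroup (A <#> B) G"
proof (rule subgroupI)
  have sA: "A \<subseteq> carrier G" and sB: "B \<subseteq> carrier G" using A B subgroup.subset by auto
  show "A <#> B \<subseteq> carrier G" using sA sB unfolding set_mult_def by auto
  show "A <#> B \<noteq> {}" using A B unfolding set_mult_def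
    by (auto dest: subgroup.one_closed)
  fix x assume "x \<in> A <#> B"
  then obtain a b where ab: "a \<in> A" "b \<in> B" "x = a \<otimes> b" unfolding set_mult_def by auto
  have "a \<in> carrier G" "b \<in> carrier G" using ab sA sB by auto
  then have "inv x = inv b \<otimes> inv a" using ab by (simp add: inv_mult_group)
  also have "\<dots> = inv a \<otimes> inv b"
  proof -
    have "inv a \<in> A" "inv b \<in> B" using ab A B by (auto dest: subgroup.m_inv_closed)
    then show ?thesis using comm by metis
  qed
  finally show "inv x \<in> A <#> B" using ab A B unfolding set_mult_def
    by (auto dest: subgroup.m_inv_closed)
next
  have sA: "A \<subseteq> carrier G" and sB: "B \<subseteq> carrier G" using A B subgroup.subset by auto
  fix x y assume "x \<in> A <#> B" "y \<in> A <#> B"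
  then obtain a b a' b' where ab: "a \<in> A" "b \<in> B" "x = a \<otimes> b" "a' \<in> A" "b' \<in> B" "y = a' \<otimes> b'"
    unfolding set_mult_def by auto
  have c: "a \<in> carrier G" "b \<in> carrier G" "a' \<in> carrier G" "b' \<in> carrier G" using ab sA sB by auto
  have "x \<otimes> y = a \<otimes> (b \<otimes> a') \<otimes> b'" using ab c by (simp add: m_assoc)
  also have "\<dots> = a \<otimes> (a' \<otimes> b) \<otimes> b'" using comm[of a' b] ab by simp
  also have "\<dots> = (a \<otimes> a') \<otimes> (b \<otimes> b')" using c by (simp add: m_assoc)
  finally show "x \<otimes> y \<in> A <#> B" using ab A B unfolding set_mult_def
    by (auto dest: subgroup.m_closed)
qed

lemma mem_set_mult: "a \<in> A \<Longrightarrow> b \<in> B \<Longrightarrow> a \<otimes> b \<in> A <#> B"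
  unfolding set_mult_def by auto

lemma comm_prod_invsub:
  assumes A: "invsub G K A" and B: "invsub G K B" and K: "K \<subseteq> carrier G"
    and comm: "\<And>a b. a \<in> A \<Longrightarrow> b \<in> B \<Longrightarrow> a \<otimes> b = b \<otimes> a"
  shows "invsub G K (A <#> B)"
  unfolding invsub_def
proof (intro conjI ballI)
  show "subgroup (A <#> B) G" using comm_prod_subgroup[OF _ _ comm] A B unfolding invsub_def by auto
  have sA: "A \<subseteq> carrier G" and sB: "B \<subseteq> carrier G" using A B subgroup.subset unfolding invsub_def by auto
  fix k x assume k: "k \<in> K" and "x \<in> A <#> B"
  then obtain a b where ab: "a \<in> A" "b \<in> B" "x = a \<otimes> b" unfolding set_mult_def by auto
  have c: "a \<in> carrier G" "b \<in> carrier G" "k \<in> carrier G" using ab sA sB k K by auto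
  have "k \<otimes> x \<otimes> inv k = (k \<otimes> a \<otimes> inv k) \<otimes> (k \<otimes> b \<otimes> inv k)"
    using c ab by (simp add: m_assoc inv_cancel_l)
  moreover have "k \<otimes> a \<otimes> inv k \<in> A" "k \<otimes> b \<otimes> inv k \<in> B" using A B k ab unfolding invsub_def by auto
  ultimately show "k \<otimes> x \<otimes> inv k \<in> A <#> B" using mem_set_mult by metis
qed


lemma complement_argument:
  assumes fin: "finite (carrier G)" and K: "K \<subseteq> carrier G"
    and XX: "invsub G K XX" and Xcomm: "\<And>x y. x \<in> XX \<Longrightarrow> y \<in> XX \<Longrightarrow> x \<otimes> y = y \<otimes> x"
    and Xgen: "XX \<subseteq> generate G (\<Union>{T. mininv G K XX T})"
    and W: "invsub G K W" "W \<subseteq> XX"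
  shows "W \<subseteq> generate G (\<Union>{T. mininv G K W T})"
proof -
  define A where "A = generate G (\<Union>{T. mininv G K W T})"
  have sX: "XX \<subseteq> carrier G" using XX unfolding invsub_def using subgroup.subset by blast
  have sW: "W \<subseteq> carrier G" using W sX by auto
  have gensub: "\<Union>{T. mininv G K W T} \<subseteq> W" unfolding mininv_def by auto
  have AW: "A \<subseteq> W" unfolding A_def
    using generate_subgroup_incl[OF gensub] W unfolding invsub_def by auto
  have Ainv: "invsub G K A" unfolding A_def
  proof (rule invsub_generate[OF K])
    show "\<Union>{T. mininv G K W T} \<subseteq> carrier G" using gensub sW by auto
    fix k h assume "k \<in> K" "h \<in> \<Union>{T. mininv G K W T}"
    then show "k \<otimes> h \<otimes> inv k \<in> \<Union>{T. mininv G K W T}" unfolding mininv_def invsub_def by blast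
  qed
  let ?Q = "\<lambda>B. invsub G K B \<and> B \<subseteq> XX \<and> A \<inter> B = {\<one>}"
  have triv: "invsub G K {\<one>}" unfolding invsub_def
    using K by (auto intro: triv_subgroup)
  have "A \<inter> {\<one>} = {\<one>}" using Ainv unfolding invsub_def by (auto dest: subgroup.one_closed)
  then have "?Q {\<one>}" using triv XX unfolding invsub_def by (auto dest: subgroup.one_closed)
  then obtain B where B: "?Q B" and Bmax: "\<And>B'. ?Q B' \<Longrightarrow> card (carrier G) - card B \<le> card (carrier G) - card B'"
    using ex_has_least_nat[of ?Q "{\<one>}" "\<lambda>B. card (carrier G) - card B"] by blast
  have sB: "B \<subseteq> carrier G" using B sX by auto
  have sA: "A \<subseteq> carrier G" using AW sW by auto
  have ABcomm: "\<And>a b. a \<in> A \<Longrightarrow> b \<in> B \<Longrightarrow> a \<otimes> b = b \<otimes> a" using Xcomm AW W B by blast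
  have ABinv: "invsub G K (A <#> B)" using comm_prod_invsub[OF Ainv _ K ABcomm] B by auto
  have XAB: "XX \<subseteq> A <#> B"
  proof (rule ccontr)
    assume nsub: "\<not> XX \<subseteq> A <#> B"
    have "\<exists>T. mininv G K XX T \<and> \<not> T \<subseteq> A <#> B"
    proof (rule ccontr)
      assume "\<nexists>T. mininv G K XX T \<and> \<not> T \<subseteq> A <#> B"
      then have "\<Union>{T. mininv G K XX T} \<subseteq> A <#> B" by blast
      then have "generate G (\<Union>{T. mininv G K XX T}) \<subseteq> A <#> B"
        using generate_subgroup_incl ABinv unfolding invsub_def by blast
      then show False using nsub Xgen by blast
    qed
    then obtain T where T: "mininv G K XX T" "\<not> T \<subseteq> A <#> B" by blast
    have Tinv: "invsub G K T" and TX: "T \<subseteq> XX" and Tnt: "T \<noteq> {\<one>}" using T unfolding mininv_def by auto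
    have "invsub G K (T \<inter> (A <#> B))" using invsub_Int[OF Tinv ABinv] .
    moreover have "T \<inter> (A <#> B) \<noteq> T" using T by auto
    ultimately have TAB: "T \<inter> (A <#> B) = {\<one>}" using T unfolding mininv_def by blast
    have BTcomm: "\<And>a b. a \<in> B \<Longrightarrow> b \<in> T \<Longrightarrow> a \<otimes> b = b \<otimes> a" using Xcomm B TX by blast
    have B'inv: "invsub G K (B <#> T)" using comm_prod_invsub[OF _ Tinv K BTcomm] B by auto
    have sT: "T \<subseteq> carrier G" using TX sX by auto
    have B'XX: "B <#> T \<subseteq> XX"
      using B TX XX unfolding invsub_def set_mult_def by (auto dest: subgroup.m_closed)
    have oneA: "\<one> \<in> A" and oneB: "\<one> \<in> B" and oneT: "\<one> \<in> T"
      using Ainv B Tinv unfolding invsub_def by (auto dest: subgroup.one_closed)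
    have AB': "A \<inter> (B <#> T) = {\<one>}"
    proof
      show "{\<one>} \<subseteq> A \<inter> (B <#> T)" using oneA oneB oneT mem_set_mult[of \<one> B \<one> T] by auto
      show "A \<inter> (B <#> T) \<subseteq> {\<one>}"
      proof
        fix x assume "x \<in> A \<inter> (B <#> T)"
        then obtain b t where x: "x \<in> A" "b \<in> B" "t \<in> T" "x = b \<otimes> t" unfolding set_mult_def by auto
        have c: "x \<in> carrier G" "b \<in> carrier G" "t \<in> carrier G" using x sA sB sT by auto
        have ib: "inv b \<in> B" using x B unfolding invsub_def by (auto dest: subgroup.m_inv_closed)
        have "t = inv b \<otimes> x" using x c by (simp add: inv_cancel_l)
        also have "\<dots> = x \<otimes> inv b" using ABcomm[of x "inv b"] x ib by auto
        finally have "t = x \<otimes> inv b" .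
        moreover have "x \<otimes> inv b \<in> A <#> B" using mem_set_mult x(1) ib by blast
        ultimately have "t \<in> A <#> B" by simp
        then have "t = \<one>" using TAB x by auto
        then have "x = b" using x c by simp
        then show "x \<in> {\<one>}" using B x by auto
      qed
    qed
    have "?Q (B <#> T)" using B'inv B'XX AB' by auto
    then have le: "card (carrier G) - card B \<le> card (carrier G) - card (B <#> T)" using Bmax by blast
    have BB': "B \<subseteq> B <#> T" using oneT sB mem_set_mult[of _ B \<one> T] by force
    have "T \<subseteq> B <#> T" using oneB sT mem_set_mult[of \<one> B _ T] by force
    moreover have "\<not> T \<subseteq> B"
    proof
      assume "T \<subseteq> B"
      then have "T \<subseteq> A <#> B" using oneA sB mem_set_mult[of \<one> A _ B] by force
      then show False using T by auto
    qed
    ultimately have "B \<subset> B <#> T" using BB' by auto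
    moreover have sBT: "B <#> T \<subseteq> carrier G" using B'XX sX by (rule subset_trans)
    moreover have "finite (B <#> T)" using finite_subset[OF sBT fin] .
    ultimately have "card B < card (B <#> T)" "card (B <#> T) \<le> card (carrier G)"
      using psubset_card_mono[of "B <#> T" B] card_mono[OF fin sBT] by auto
    then show False using le by linarith
  qed
  show "W \<subseteq> A"
  proof
    fix w assume w: "w \<in> W"
    then obtain a b where ab: "a \<in> A" "b \<in> B" "w = a \<otimes> b" using XAB W unfolding set_mult_def by blast
    have c: "a \<in> carrier G" "b \<in> carrier G" using ab sA sB by auto
    have "b = inv a \<otimes> w" using ab c by (simp add: m_assoc[symmetric])
    moreover have "inv a \<otimes> w \<in> W"
    proof -
      have "inv a \<in> W" using ab AW W unfolding invsub_def by (auto dest: subgroup.m_inv_closed)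
      then show ?thesis using w W unfolding invsub_def by (meson subgroup.m_closed)
    qed
    ultimately have bW: "b \<in> W" by (simp only:)
    have WBinv: "invsub G K (W \<inter> B)" using invsub_Int W B by auto
    have "W \<inter> B = {\<one>}"
    proof (rule ccontr)
      assume "W \<inter> B \<noteq> {\<one>}"
      then obtain T where T: "mininv G K (W \<inter> B) T" using mininv_exists[OF fin WBinv] by blast
      then have TW: "mininv G K W T" unfolding mininv_def by blast
      have "T \<subseteq> A" unfolding A_def
      proof
        fix x assume "x \<in> T" then show "x \<in> generate G (\<Union>{T. mininv G K W T})"
          using TW by (intro generate.incl) blast
      qed
      moreover have "T \<subseteq> W \<inter> B" using T unfolding mininv_def by blast
      ultimately have "T \<subseteq> A \<inter> B" by blast
      then have "T \<subseteq> {\<one>}" using B by simp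
      moreover have "\<one> \<in> T" using T unfolding mininv_def invsub_def by (blast intro: subgroup.one_closed)
      moreover have "T \<noteq> {\<one>}" using T unfolding mininv_def by blast
      ultimately show False by blast
    qed
    then have "b = \<one>" using bW ab(2) by blast
    then show "w \<in> A" using ab c by simp
  qed
qed

end


context group begin

definition cj :: "'a \<Rightarrow> 'a set \<Rightarrow> 'a set" where
  "cj g U0 = (\<lambda>m. g \<otimes> m \<otimes> inv g) ` U0"

lemma cj_mult: "g \<in> carrier G \<Longrightarrow> a \<in> carrier G \<Longrightarrow> b \<in> carrier G \<Longrightarrow>
   g \<otimes> (a \<otimes> b) \<otimes> inv g = (g \<otimes> a \<otimes> inv g) \<otimes> (g \<otimes> b \<otimes> inv g)"
  by (simp add: m_assoc inv_cancel_l)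

lemma cj_inv: "g \<in> carrier G \<Longrightarrow> a \<in> carrier G \<Longrightarrow>
   g \<otimes> inv a \<otimes> inv g = inv (g \<otimes> a \<otimes> inv g)"
  by (simp add: m_assoc inv_mult_group)

lemma cj_cancel: "g \<in> carrier G \<Longrightarrow> a \<in> carrier G \<Longrightarrow> inv g \<otimes> (g \<otimes> a \<otimes> inv g) \<otimes> inv (inv g) = a"
  by (simp add: m_assoc inv_cancel_l)

lemma cj_cancel2: "g \<in> carrier G \<Longrightarrow> a \<in> carrier G \<Longrightarrow> g \<otimes> (inv g \<otimes> a \<otimes> inv (inv g)) \<otimes> inv g = a"
  by (simp add: m_assoc inv_cancel_l2)

lemma cj_subgroup:
  assumes g: "g \<in> carrier G" and T: "subgroup T G"
  shows "subgroup (cj g T) G"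
proof (rule subgroupI)
  have sT: "T \<subseteq> carrier G" using T subgroup.subset by auto
  show "cj g T \<subseteq> carrier G" using sT g unfolding cj_def by auto
  show "cj g T \<noteq> {}" using T unfolding cj_def by (auto dest: subgroup.one_closed)
  fix a assume "a \<in> cj g T"
  then obtain m where m: "m \<in> T" "a = g \<otimes> m \<otimes> inv g" unfolding cj_def by auto
  have "inv a = g \<otimes> inv m \<otimes> inv g" using m sT g cj_inv by auto
  then show "inv a \<in> cj g T" using m T unfolding cj_def by (auto dest: subgroup.m_inv_closed)
next
  have sT: "T \<subseteq> carrier G" using T subgroup.subset by auto
  fix a b assume "a \<in> cj g T" "b \<in> cj g T"
  then obtain m n where m: "m \<in> T" "a = g \<otimes> m \<otimes> inv g" "n \<in> T" "b = g \<otimes> n \<otimes> inv g" unfolding cj_def by auto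
  have "m \<in> carrier G" "n \<in> carrier G" using m sT by auto
  then have "a \<otimes> b = g \<otimes> (m \<otimes> n) \<otimes> inv g" using m(2,4) g cj_mult by simp
  moreover have "m \<otimes> n \<in> T" using m T by (meson subgroup.m_closed)
  ultimately show "a \<otimes> b \<in> cj g T" unfolding cj_def by auto
qed

lemma cj_invsub:
  assumes g: "g \<in> carrier G" and K: "K \<subseteq> carrier G"
    and Kg: "\<And>k. k \<in> K \<Longrightarrow> inv g \<otimes> k \<otimes> g \<in> K"
    and T: "invsub G K T"
  shows "invsub G K (cj g T)"
  unfolding invsub_def
proof (intro conjI ballI)
  show "subgroup (cj g T) G" using cj_subgroup g T unfolding invsub_def by auto
  have sT: "T \<subseteq> carrier G" using T subgroup.subset unfolding invsub_def by auto
  fix k a assume k: "k \<in> K" and "a \<in> cj g T"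
  then obtain m where m: "m \<in> T" "a = g \<otimes> m \<otimes> inv g" unfolding cj_def by auto
  define k' where "k' = inv g \<otimes> k \<otimes> g"
  have k'K: "k' \<in> K" using Kg k k'_def by auto
  have kc: "k \<in> carrier G" using k K by auto
  have mc: "m \<in> carrier G" using m sT by auto
  have "k \<otimes> a \<otimes> inv k = g \<otimes> (k' \<otimes> m \<otimes> inv k') \<otimes> inv g"
    using g kc mc m(2) unfolding k'_def by (simp add: m_assoc inv_mult_group inv_cancel_l inv_cancel_l2)
  moreover have "k' \<otimes> m \<otimes> inv k' \<in> T" using T k'K m unfolding invsub_def by auto
  ultimately show "k \<otimes> a \<otimes> inv k \<in> cj g T" unfolding cj_def by auto
qed

lemma cj_cj: "g \<in> carrier G \<Longrightarrow> U0 \<subseteq> carrier G \<Longrightarrow> cj (inv g) (cj g U0) = U0"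
  unfolding cj_def image_image using cj_cancel by (simp add: subset_iff)

lemma cj_one: "g \<in> carrier G \<Longrightarrow> cj g {\<one>} = {\<one>}"
  unfolding cj_def by simp

lemma cj_mono: "U0 \<subseteq> V0 \<Longrightarrow> cj g U0 \<subseteq> cj g V0"
  unfolding cj_def by auto

lemma cj_nontriv:
  assumes "g \<in> carrier G" "U0 \<subseteq> carrier G" "U0 \<noteq> {\<one>}"
  shows "cj g U0 \<noteq> {\<one>}"
  using assms cj_cj[of g U0] cj_one[of "inv g"] by auto

lemma mininv_cj:
  assumes g: "g \<in> carrier G" and K: "K \<subseteq> carrier G"
    and Kg: "\<And>k. k \<in> K \<Longrightarrow> inv g \<otimes> k \<otimes> g \<in> K"
    and Kg2: "\<And>k. k \<in> K \<Longrightarrow> g \<otimes> k \<otimes> inv g \<in> K"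
    and T: "mininv G K K T"
  shows "mininv G K K (cj g T)"
  unfolding mininv_def
proof (intro conjI allI impI)
  have Tinv: "invsub G K T" using T unfolding mininv_def by auto
  have sT: "T \<subseteq> carrier G" using Tinv subgroup.subset unfolding invsub_def by auto
  show "invsub G K (cj g T)" using cj_invsub[OF g K Kg Tinv] .
  show "cj g T \<subseteq> K" using T Kg2 unfolding mininv_def cj_def by auto
  show "cj g T \<noteq> {\<one>}" using cj_nontriv[OF g sT] T unfolding mininv_def by auto
  fix T' assume T': "invsub G K T'" "T' \<noteq> {\<one>}" "T' \<subseteq> cj g T"
  have ig: "inv g \<in> carrier G" using g by simp
  have Kg': "\<And>k. k \<in> K \<Longrightarrow> inv (inv g) \<otimes> k \<otimes> inv g \<in> K" using Kg2 g by simp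
  have sT': "T' \<subseteq> carrier G" using T' subgroup.subset unfolding invsub_def by auto
  have "invsub G K (cj (inv g) T')" using cj_invsub[OF ig K Kg' T'(1)] .
  moreover have "cj (inv g) T' \<noteq> {\<one>}" using cj_nontriv[OF ig sT' T'(2)] .
  moreover have "cj (inv g) T' \<subseteq> T" using cj_mono[OF T'(3), of "inv g"] cj_cj[OF g sT] by simp
  ultimately have "cj (inv g) T' = T" using T unfolding mininv_def by blast
  then have "cj g (cj (inv g) T') = cj g T" by simp
  moreover have "cj g (cj (inv g) T') = T'" using cj_cj[OF ig sT'] g by simp
  ultimately show "T' = cj g T" by simp
qed

end

section \<open>Permutation basics\<close>

lemma BG_carrier: "carrier (BijGroup P) = Bij P"
  by (simp add: BijGroup_def)

lemma BG_mult_apply: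
  assumes "f \<in> carrier (BijGroup P)" "g \<in> carrier (BijGroup P)" "x \<in> P"
  shows "(f \<otimes>\<^bsub>BijGroup P\<^esub> g) x = f (g x)"
  using assms by (simp add: BijGroup_def compose_def)

lemma BG_one_apply: "x \<in> P \<Longrightarrow> \<one>\<^bsub>BijGroup P\<^esub> x = x"
  by (simp add: BijGroup_def)

lemma BG_closed: "f \<in> carrier (BijGroup P) \<Longrightarrow> x \<in> P \<Longrightarrow> f x \<in> P"
  by (auto simp: BijGroup_def Bij_def bij_betw_def)

lemma BG_image: "f \<in> carrier (BijGroup P) \<Longrightarrow> f ` P = P"
  by (auto simp: BijGroup_def Bij_def bij_betw_def)

lemma BG_eqI:
  assumes "f \<in> carrier (BijGroup P)" "g \<in> carrier (BijGroup P)" "\<And>x. x \<in> P \<Longrightarrow> f x = g x"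
  shows "f = g"
  using assms Bij_imp_extensional[of f P] Bij_imp_extensional[of g P]
  by (auto simp: BijGroup_def intro: extensionalityI)

lemma BG_inv_apply1:
  assumes "f \<in> carrier (BijGroup P)" "x \<in> P"
  shows "(inv\<^bsub>BijGroup P\<^esub> f) (f x) = x"
proof -
  interpret group "BijGroup P" by (rule group_BijGroup)
  have "(inv\<^bsub>BijGroup P\<^esub> f \<otimes>\<^bsub>BijGroup P\<^esub> f) x = \<one>\<^bsub>BijGroup P\<^esub> x" using assms by simp
  then show ?thesis using assms BG_mult_apply[of "inv\<^bsub>BijGroup P\<^esub> f" P f x] BG_one_apply[of x P] by simp
qed

lemma BG_inv_apply2:
  assumes "f \<in> carrier (BijGroup P)" "x \<in> P"
  shows "f ((inv\<^bsub>BijGroup P\<^esub> f) x) = x"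
proof -
  interpret group "BijGroup P" by (rule group_BijGroup)
  have "(f \<otimes>\<^bsub>BijGroup P\<^esub> inv\<^bsub>BijGroup P\<^esub> f) x = \<one>\<^bsub>BijGroup P\<^esub> x" using assms by simp
  then show ?thesis using assms BG_mult_apply[of f P "inv\<^bsub>BijGroup P\<^esub> f" x] BG_one_apply[of x P] by simp
qed

lemma BG_finite: "finite P \<Longrightarrow> finite (carrier (BijGroup P))"
proof -
  assume "finite P"
  moreover have "carrier (BijGroup P) \<subseteq> PiE P (\<lambda>_. P)"
    by (auto simp: BijGroup_def Bij_def bij_betw_def PiE_def)
  ultimately show ?thesis by (meson finite_PiE finite_subset)
qed



lemma (in group) normal_restrict_iff:
  assumes H: "subgroup H G"
  shows "N \<lhd> G\<lparr>carrier := H\<rparr> \<longleftrightarrow> invsub G H N \<and> N \<subseteq> H"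
proof -
  interpret GH: group "G\<lparr>carrier := H\<rparr>" using subgroup_imp_group[OF H] .
  have sH: "H \<subseteq> carrier G" using H subgroup.subset by auto
  show ?thesis
  proof
    assume N: "N \<lhd> G\<lparr>carrier := H\<rparr>"
    then have sub: "subgroup N (G\<lparr>carrier := H\<rparr>)" and cl: "\<forall>x\<in>H. \<forall>h\<in>N. x \<otimes> h \<otimes> inv\<^bsub>G\<lparr>carrier := H\<rparr>\<^esub> x \<in> N"
      using GH.normal_inv_iff by auto
    have NH: "N \<subseteq> H" using subgroup.subset[OF sub] by simp
    have "subgroup N G" using incl_subgroup[OF H sub] .
    moreover have "\<forall>x\<in>H. \<forall>h\<in>N. x \<otimes> h \<otimes> inv x \<in> N" using cl m_inv_consistent[OF H] by auto
    ultimately show "invsub G H N \<and> N \<subseteq> H" unfolding invsub_def using NH by auto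
  next
    assume N: "invsub G H N \<and> N \<subseteq> H"
    then have "subgroup N (G\<lparr>carrier := H\<rparr>)" using subgroup_incl[OF _ H] unfolding invsub_def by auto
    moreover have "\<forall>x\<in>H. \<forall>h\<in>N. x \<otimes> h \<otimes> inv\<^bsub>G\<lparr>carrier := H\<rparr>\<^esub> x \<in> N"
      using N m_inv_consistent[OF H] unfolding invsub_def by auto
    ultimately show "N \<lhd> G\<lparr>carrier := H\<rparr>" using GH.normal_inv_iff by auto
  qed
qed

lemma minimal_normal_iff:
  assumes K: "subgroup K (BijGroup P)"
  shows "minimal_normal P K M \<longleftrightarrow> mininv (BijGroup P) K K M"
proof -
  interpret BG: group "BijGroup P" by (rule group_BijGroup)
  show ?thesis
    unfolding minimal_normal_def mininv_def BG.normal_restrict_iff[OF K]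
    by blast
qed

lemma socle_eq:
  assumes K: "subgroup K (BijGroup P)"
  shows "socle P K = generate (BijGroup P) (\<Union>{M. mininv (BijGroup P) K K M})"
proof -
  have "Collect (minimal_normal P K) = {M. mininv (BijGroup P) K K M}"
    using minimal_normal_iff[OF K] by auto
  then show ?thesis unfolding socle_def by simp
qed

locale setting =
  fixes P :: "'a set" and G :: "('a \<Rightarrow> 'a) set" and CC :: "'a set set"
  assumes finP: "finite P"
    and subG: "subgroup G (BijGroup P)"
    and ntC: "nontrivial_partition P CC"
    and invC: "invariant_partition P G CC"
    and normC: "normal_partition P G CC"
    and minC: "minimal_partition P G CC"
begin

abbreviation SP where "SP \<equiv> BijGroup P"
abbreviation KK where "KK \<equiv> kernel_on G CC"

sublocale BG: group SP by (rule group_BijGroup)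

lemma finSP: "finite (carrier SP)" using BG_finite[OF finP] .

lemma G_sub: "G \<subseteq> carrier SP" using subG subgroup.subset by auto
lemma G_mem: "g \<in> G \<Longrightarrow> g \<in> carrier SP" using G_sub by auto
lemma G_inv: "g \<in> G \<Longrightarrow> inv\<^bsub>SP\<^esub> g \<in> G" by (rule subgroup.m_inv_closed[OF subG])
lemma G_mult: "g \<in> G \<Longrightarrow> h \<in> G \<Longrightarrow> g \<otimes>\<^bsub>SP\<^esub> h \<in> G" by (rule subgroup.m_closed[OF subG])
lemma G_one: "\<one>\<^bsub>SP\<^esub> \<in> G" using subG subgroup.one_closed by auto

lemma CC_part: "is_partition P CC" using invC unfolding invariant_partition_def by auto
lemma CC_sub: "C \<in> CC \<Longrightarrow> C \<subseteq> P" using CC_part unfolding is_partition_def by auto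
lemma CC_ne: "C \<in> CC \<Longrightarrow> C \<noteq> {}" using CC_part unfolding is_partition_def by auto
lemma CC_disj: "C \<in> CC \<Longrightarrow> D \<in> CC \<Longrightarrow> x \<in> C \<Longrightarrow> x \<in> D \<Longrightarrow> C = D"
  using CC_part unfolding is_partition_def by blast
lemma CC_cover: "x \<in> P \<Longrightarrow> \<exists>C\<in>CC. x \<in> C" using CC_part unfolding is_partition_def by auto
lemma G_maps: "g \<in> G \<Longrightarrow> C \<in> CC \<Longrightarrow> g ` C \<in> CC" using invC unfolding invariant_partition_def by auto

lemma KK_eq: "KK = {g\<in>G. \<forall>C\<in>CC. g ` C = C}" unfolding kernel_on_def by simp

lemma K_sub_G: "KK \<subseteq> G" unfolding kernel_on_def by auto

lemma K_pres: "k \<in> KK \<Longrightarrow> C \<in> CC \<Longrightarrow> x \<in> C \<Longrightarrow> k x \<in> C"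
  unfolding kernel_on_def by auto

lemma K_char:
  assumes f: "f \<in> G" and pres: "\<And>C x. C \<in> CC \<Longrightarrow> x \<in> C \<Longrightarrow> f x \<in> C"
  shows "f \<in> KK"
proof -
  have "f ` C = C" if C: "C \<in> CC" for C
  proof -
    have fC: "f ` C \<in> CC" using G_maps f C by auto
    obtain x where x: "x \<in> C" using CC_ne C by blast
    have "f x \<in> f ` C" "f x \<in> C" using x pres C by auto
    then show ?thesis using CC_disj[OF fC C] by auto
  qed
  then show ?thesis using f unfolding kernel_on_def by auto
qed

lemma K_mem_SP: "k \<in> KK \<Longrightarrow> k \<in> carrier SP" using K_sub_G G_sub by auto

lemma K_subgroup: "subgroup KK SP"
proof (rule BG.subgroupI)
  show "KK \<subseteq> carrier SP" using K_sub_G G_sub by (rule subset_trans)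
  have "\<one>\<^bsub>SP\<^esub> \<in> KK"
  proof (rule K_char[OF G_one])
    fix C x assume C: "C \<in> CC" and x: "x \<in> C"
    have "x \<in> P" using CC_sub[OF C] x by blast
    then have "\<one>\<^bsub>SP\<^esub> x = x" by (rule BG_one_apply)
    then show "\<one>\<^bsub>SP\<^esub> x \<in> C" using x by simp
  qed
  then show "KK \<noteq> {}" by blast
  fix a assume a: "a \<in> KK"
  show "inv\<^bsub>SP\<^esub> a \<in> KK"
  proof (rule K_char)
    have "a \<in> G" using a K_sub_G by blast
    then show "inv\<^bsub>SP\<^esub> a \<in> G" by (rule G_inv)
    fix C x assume C: "C \<in> CC" and x: "x \<in> C"
    have "a ` C = C" using a C unfolding kernel_on_def by blast
    then obtain y where y: "y \<in> C" "a y = x" using x by (metis imageE)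
    have yP: "y \<in> P" using CC_sub[OF C] y(1) by blast
    have "(inv\<^bsub>SP\<^esub> a) (a y) = y" using BG_inv_apply1[OF K_mem_SP[OF a] yP] .
    then have "(inv\<^bsub>SP\<^esub> a) x = y" using y(2) by simp
    then show "(inv\<^bsub>SP\<^esub> a) x \<in> C" using y(1) by simp
  qed
next
  fix a b assume a: "a \<in> KK" and b: "b \<in> KK"
  show "a \<otimes>\<^bsub>SP\<^esub> b \<in> KK"
  proof (rule K_char)
    have "a \<in> G" "b \<in> G" using a b K_sub_G by blast+
    then show "a \<otimes>\<^bsub>SP\<^esub> b \<in> G" by (rule G_mult)
    fix C x assume C: "C \<in> CC" and x: "x \<in> C"
    have xP: "x \<in> P" using CC_sub[OF C] x by blast
    have "(a \<otimes>\<^bsub>SP\<^esub> b) x = a (b x)" using BG_mult_apply[OF K_mem_SP[OF a] K_mem_SP[OF b] xP] .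
    moreover have "b x \<in> C" using K_pres[OF b C x] .
    then have "a (b x) \<in> C" using K_pres[OF a C] by blast
    ultimately show "(a \<otimes>\<^bsub>SP\<^esub> b) x \<in> C" by simp
  qed
qed

lemma K_invsub: "invsub SP G KK"
  unfolding invsub_def
proof (intro conjI ballI)
  show "subgroup KK SP" by (rule K_subgroup)
  fix g k assume g: "g \<in> G" and k: "k \<in> KK"
  have gc: "g \<in> carrier SP" using G_mem[OF g] .
  have kc: "k \<in> carrier SP" using K_mem_SP[OF k] .
  have igc: "inv\<^bsub>SP\<^esub> g \<in> carrier SP" using G_mem[OF G_inv[OF g]] .
  show "g \<otimes>\<^bsub>SP\<^esub> k \<otimes>\<^bsub>SP\<^esub> inv\<^bsub>SP\<^esub> g \<in> KK"
  proof (rule K_char)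
    have "k \<in> G" using k K_sub_G by blast
    then show "g \<otimes>\<^bsub>SP\<^esub> k \<otimes>\<^bsub>SP\<^esub> inv\<^bsub>SP\<^esub> g \<in> G" using g by (intro G_mult G_inv)
    fix C x assume C: "C \<in> CC" and x: "x \<in> C"
    have xP: "x \<in> P" using CC_sub[OF C] x by blast
    define y where "y = (inv\<^bsub>SP\<^esub> g) x"
    have yP: "y \<in> P" using BG_closed[OF igc xP] y_def by simp
    obtain D where D: "D \<in> CC" "y \<in> D" using CC_cover[OF yP] by auto
    have kyD: "k y \<in> D" using K_pres[OF k D] .
    have gDC: "g ` D \<in> CC" using G_maps g D by auto
    have "g y \<in> g ` D" using D(2) by blast
    moreover have "g y = x" unfolding y_def using BG_inv_apply2[OF gc xP] .
    ultimately have xgD: "x \<in> g ` D" by simp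
    have gD: "g ` D = C" using CC_disj[OF gDC C xgD x] .
    have "(g \<otimes>\<^bsub>SP\<^esub> k \<otimes>\<^bsub>SP\<^esub> inv\<^bsub>SP\<^esub> g) x = g (k y)"
      using BG_mult_apply[OF BG.m_closed[OF gc kc] igc xP] BG_mult_apply[OF gc kc yP] y_def by simp
    then show "(g \<otimes>\<^bsub>SP\<^esub> k \<otimes>\<^bsub>SP\<^esub> inv\<^bsub>SP\<^esub> g) x \<in> C" using kyD gD by auto
  qed
qed

lemma CC_not_single: "CC \<noteq> {P}" using ntC unfolding nontrivial_partition_def by auto

lemma exists_pair: "\<exists>C\<in>CC. \<exists>x\<in>C. \<exists>y\<in>C. x \<noteq> y"
proof (rule ccontr)
  assume "\<not> ?thesis"
  then have single: "\<And>C x y. C \<in> CC \<Longrightarrow> x \<in> C \<Longrightarrow> y \<in> C \<Longrightarrow> x = y" by blast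
  have "CC = (\<lambda>x. {x}) ` P"
  proof
    show "CC \<subseteq> (\<lambda>x. {x}) ` P"
    proof
      fix C assume C: "C \<in> CC"
      then obtain x where x: "x \<in> C" using CC_ne by blast
      then have "C = {x}" using single[OF C] x by blast
      then show "C \<in> (\<lambda>x. {x}) ` P" using x C CC_sub by auto
    qed
    show "(\<lambda>x. {x}) ` P \<subseteq> CC"
    proof
      fix A assume "A \<in> (\<lambda>x. {x}) ` P"
      then obtain x where x: "x \<in> P" "A = {x}" by auto
      then obtain C where C: "C \<in> CC" "x \<in> C" using CC_cover by auto
      then have "C = {x}" using single[OF C(1)] by blast
      then show "A \<in> CC" using C x by auto
    qed
  qed
  then show False using ntC unfolding nontrivial_partition_def by auto
qed

lemma K_trans: "C \<in> CC \<Longrightarrow> x \<in> C \<Longrightarrow> y \<in> C \<Longrightarrow> \<exists>k\<in>KK. k x = y"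
  using normC unfolding normal_partition_def by auto

lemma K_nontriv: "KK \<noteq> {\<one>\<^bsub>SP\<^esub>}"
proof
  assume K1: "KK = {\<one>\<^bsub>SP\<^esub>}"
  obtain C x y where C: "C \<in> CC" "x \<in> C" "y \<in> C" "x \<noteq> y" using exists_pair by blast
  obtain k where "k \<in> KK" "k x = y" using K_trans C by blast
  then show False using K1 BG_one_apply[of x P] C CC_sub by auto
qed

end


definition orb :: "('a \<Rightarrow> 'a) set \<Rightarrow> 'a \<Rightarrow> 'a set" where
  "orb H x = (\<lambda>h. h x) ` H"

context setting begin

lemma sub_mem: "subgroup H SP \<Longrightarrow> h \<in> H \<Longrightarrow> h \<in> carrier SP"
  using subgroup.subset by blast

lemma orb_sub:
  assumes H: "subgroup H SP" and x: "x \<in> P" shows "orb H x \<subseteq> P"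
  unfolding orb_def using BG_closed[OF sub_mem[OF H] x] by blast

lemma orb_self:
  assumes H: "subgroup H SP" and x: "x \<in> P" shows "x \<in> orb H x"
proof -
  have "\<one>\<^bsub>SP\<^esub> \<in> H" using subgroup.one_closed[OF H] .
  moreover have "\<one>\<^bsub>SP\<^esub> x = x" using BG_one_apply[OF x] .
  ultimately show ?thesis unfolding orb_def by (metis image_eqI)
qed

lemma orb_eq:
  assumes H: "subgroup H SP" and x: "x \<in> P" and z: "z \<in> orb H x"
  shows "orb H z = orb H x"
proof -
  obtain h where h: "h \<in> H" "z = h x" using z unfolding orb_def by blast
  have hc: "h \<in> carrier SP" using sub_mem[OF H h(1)] .
  show ?thesis
  proof
    show "orb H z \<subseteq> orb H x"
    proof
      fix w assume "w \<in> orb H z"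
      then obtain h' where h': "h' \<in> H" "w = h' z" unfolding orb_def by blast
      have "(h' \<otimes>\<^bsub>SP\<^esub> h) x = h' (h x)" using BG_mult_apply[OF sub_mem[OF H h'(1)] hc x] .
      moreover have "h' \<otimes>\<^bsub>SP\<^esub> h \<in> H" using subgroup.m_closed[OF H h'(1) h(1)] .
      ultimately show "w \<in> orb H x" unfolding orb_def using h h' by (metis image_eqI)
    qed
    show "orb H x \<subseteq> orb H z"
    proof
      fix w assume "w \<in> orb H x"
      then obtain h' where h': "h' \<in> H" "w = h' x" unfolding orb_def by blast
      have ih: "inv\<^bsub>SP\<^esub> h \<in> H" using subgroup.m_inv_closed[OF H h(1)] .
      have "(h' \<otimes>\<^bsub>SP\<^esub> inv\<^bsub>SP\<^esub> h) (h x) = h' ((inv\<^bsub>SP\<^esub> h) (h x))"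
        using BG_mult_apply[OF sub_mem[OF H h'(1)] sub_mem[OF H ih] BG_closed[OF hc x]] .
      also have "\<dots> = h' x" using BG_inv_apply1[OF hc x] by simp
      finally have "(h' \<otimes>\<^bsub>SP\<^esub> inv\<^bsub>SP\<^esub> h) z = w" using h h' by simp
      moreover have "h' \<otimes>\<^bsub>SP\<^esub> inv\<^bsub>SP\<^esub> h \<in> H" using subgroup.m_closed[OF H h'(1) ih] .
      ultimately show "w \<in> orb H z" unfolding orb_def by (metis image_eqI)
    qed
  qed
qed

lemma orb_conj:
  assumes H: "invsub SP G H" and g: "g \<in> G" and x: "x \<in> P"
  shows "g ` orb H x = orb H (g x)"
proof -
  have Hs: "subgroup H SP" using H unfolding invsub_def by blast
  have gc: "g \<in> carrier SP" using G_mem[OF g] .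
  have igG: "inv\<^bsub>SP\<^esub> g \<in> G" using G_inv[OF g] .
  have igc: "inv\<^bsub>SP\<^esub> g \<in> carrier SP" using G_mem[OF igG] .
  show ?thesis
  proof
    show "g ` orb H x \<subseteq> orb H (g x)"
    proof
      fix w assume "w \<in> g ` orb H x"
      then obtain h where h: "h \<in> H" "w = g (h x)" unfolding orb_def by blast
      have hc: "h \<in> carrier SP" using sub_mem[OF Hs h(1)] .
      have gx: "g x \<in> P" using BG_closed[OF gc x] .
      have "(g \<otimes>\<^bsub>SP\<^esub> h \<otimes>\<^bsub>SP\<^esub> inv\<^bsub>SP\<^esub> g) (g x) = (g \<otimes>\<^bsub>SP\<^esub> h) ((inv\<^bsub>SP\<^esub> g) (g x))"
        using BG_mult_apply[OF BG.m_closed[OF gc hc] igc gx] .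
      also have "\<dots> = g (h x)" using BG_inv_apply1[OF gc x] BG_mult_apply[OF gc hc x] by simp
      finally have eq: "(g \<otimes>\<^bsub>SP\<^esub> h \<otimes>\<^bsub>SP\<^esub> inv\<^bsub>SP\<^esub> g) (g x) = w" using h by simp
      have "g \<otimes>\<^bsub>SP\<^esub> h \<otimes>\<^bsub>SP\<^esub> inv\<^bsub>SP\<^esub> g \<in> H" using H g h unfolding invsub_def by blast
      then show "w \<in> orb H (g x)" unfolding orb_def using eq by (metis image_eqI)
    qed
    show "orb H (g x) \<subseteq> g ` orb H x"
    proof
      fix w assume "w \<in> orb H (g x)"
      then obtain h where h: "h \<in> H" "w = h (g x)" unfolding orb_def by blast
      have hc: "h \<in> carrier SP" using sub_mem[OF Hs h(1)] .
      define h' where "h' = inv\<^bsub>SP\<^esub> g \<otimes>\<^bsub>SP\<^esub> h \<otimes>\<^bsub>SP\<^esub> inv\<^bsub>SP\<^esub> (inv\<^bsub>SP\<^esub> g)"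
      have h'H: "h' \<in> H" using H igG h unfolding invsub_def h'_def by blast
      have h'eq: "h' = inv\<^bsub>SP\<^esub> g \<otimes>\<^bsub>SP\<^esub> h \<otimes>\<^bsub>SP\<^esub> g" unfolding h'_def using gc by simp
      have hgx: "h (g x) \<in> P" using BG_closed[OF hc BG_closed[OF gc x]] .
      have "h' x = (inv\<^bsub>SP\<^esub> g) (h (g x))"
        using BG_mult_apply[OF BG.m_closed[OF igc hc] gc x] BG_mult_apply[OF igc hc BG_closed[OF gc x]] h'eq by simp
      then have "g (h' x) = h (g x)" using BG_inv_apply2[OF gc hgx] by simp
      then show "w \<in> g ` orb H x" unfolding orb_def using h h'H by (metis image_eqI)
    qed
  qed
qed

lemma orbits_invariant:
  assumes H: "invsub SP G H"
  shows "invariant_partition P G (orb H ` P)"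
proof -
  have Hs: "subgroup H SP" using H unfolding invsub_def by blast
  have part: "is_partition P (orb H ` P)"
    unfolding is_partition_def
  proof (intro conjI ballI impI)
    fix A assume "A \<in> orb H ` P"
    then show "A \<noteq> {}" using orb_self[OF Hs] by blast
  next
    show "\<Union> (orb H ` P) = P" using orb_self[OF Hs] orb_sub[OF Hs] by blast
  next
    fix A B assume A: "A \<in> orb H ` P" and B: "B \<in> orb H ` P" and AB: "A \<noteq> B"
    obtain x y where xy: "x \<in> P" "A = orb H x" "y \<in> P" "B = orb H y" using A B by blast
    show "A \<inter> B = {}"
    proof (rule ccontr)
      assume "A \<inter> B \<noteq> {}"
      then obtain z where "z \<in> orb H x" "z \<in> orb H y" using xy by blast
      then have "orb H x = orb H y" using orb_eq[OF Hs xy(1)] orb_eq[OF Hs xy(3)] by metis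
      then show False using AB xy by simp
    qed
  qed
  have "\<forall>g\<in>G. \<forall>A\<in>orb H ` P. g ` A \<in> orb H ` P"
  proof (intro ballI)
    fix g A assume g: "g \<in> G" and "A \<in> orb H ` P"
    then obtain x where x: "x \<in> P" "A = orb H x" by blast
    have "g ` A = orb H (g x)" using orb_conj[OF H g x(1)] x(2) by simp
    moreover have "g x \<in> P" using BG_closed[OF G_mem[OF g] x(1)] .
    ultimately show "g ` A \<in> orb H ` P" by blast
  qed
  then show ?thesis unfolding invariant_partition_def using part by blast
qed

lemma orb_in_class:
  assumes H: "subgroup H SP" "H \<subseteq> KK" and C: "C \<in> CC" and x: "x \<in> C"
  shows "orb H x \<subseteq> C"
  unfolding orb_def using K_pres[OF _ C x] H(2) by blast

lemma CC_eq_single: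
  assumes C: "C \<in> CC" and CP: "C = P" shows False
proof -
  have "CC = {P}"
  proof
    show "{P} \<subseteq> CC" using C CP by simp
    show "CC \<subseteq> {P}"
    proof
      fix D assume D: "D \<in> CC"
      obtain y where y: "y \<in> D" using CC_ne[OF D] by blast
      have "y \<in> C" using CC_sub[OF D] y CP by blast
      then have "D = C" using CC_disj[OF D C y] by simp
      then show "D \<in> {P}" using CP by simp
    qed
  qed
  then show False using CC_not_single by simp
qed

lemma dichotomy:
  assumes H: "invsub SP G H" and HK: "H \<subseteq> KK"
  shows "H = {\<one>\<^bsub>SP\<^esub>} \<or> (\<forall>C\<in>CC. \<forall>x\<in>C. \<forall>y\<in>C. \<exists>h\<in>H. h x = y)"
proof (cases "orb H ` P = (\<lambda>x. {x}) ` P")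
  case True
  have Hs: "subgroup H SP" using H unfolding invsub_def by blast
  have "h = \<one>\<^bsub>SP\<^esub>" if h: "h \<in> H" for h
  proof (rule BG_eqI[OF sub_mem[OF Hs h] BG.one_closed])
    fix x assume x: "x \<in> P"
    have "orb H x \<in> (\<lambda>x. {x}) ` P" using True x by blast
    then obtain y where "orb H x = {y}" by blast
    moreover have "x \<in> orb H x" "h x \<in> orb H x" using orb_self[OF Hs x] h unfolding orb_def by auto
    ultimately have "h x = x" by (metis singletonD)
    then show "h x = \<one>\<^bsub>SP\<^esub> x" using BG_one_apply[OF x] by simp
  qed
  then have "H = {\<one>\<^bsub>SP\<^esub>}" using subgroup.one_closed[OF Hs] by blast
  then show ?thesis by blast
next
  case False
  have Hs: "subgroup H SP" using H unfolding invsub_def by blast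
  have inv: "invariant_partition P G (orb H ` P)" using orbits_invariant[OF H] .
  have ref: "refines (orb H ` P) CC"
    unfolding refines_def
  proof
    fix A assume "A \<in> orb H ` P"
    then obtain x where x: "x \<in> P" "A = orb H x" by blast
    obtain C where C: "C \<in> CC" "x \<in> C" using CC_cover[OF x(1)] by blast
    show "\<exists>B\<in>CC. A \<subseteq> B" using orb_in_class[OF Hs HK C] x C by blast
  qed
  have notP: "orb H ` P \<noteq> {P}"
  proof
    assume eqP: "orb H ` P = {P}"
    obtain C where C: "C \<in> CC" using exists_pair by blast
    obtain x where x: "x \<in> C" using CC_ne[OF C] by blast
    have xP: "x \<in> P" using CC_sub[OF C] x by blast
    have "orb H x = P" using eqP xP by blast
    then have "P \<subseteq> C" using orb_in_class[OF Hs HK C x] by simp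
    then have "C = P" using CC_sub[OF C] by blast
    then show False using CC_eq_single[OF C] by simp
  qed
  have nt: "nontrivial_partition P (orb H ` P)"
    unfolding nontrivial_partition_def using inv False notP unfolding invariant_partition_def by blast
  have eq: "orb H ` P = CC" using minC inv nt ref unfolding minimal_partition_def by blast
  have "\<forall>C\<in>CC. \<forall>x\<in>C. \<forall>y\<in>C. \<exists>h\<in>H. h x = y"
  proof (intro ballI)
    fix C x y assume C: "C \<in> CC" and x: "x \<in> C" and y: "y \<in> C"
    have xP: "x \<in> P" using CC_sub[OF C] x by blast
    have "orb H x \<in> CC" using eq xP by blast
    moreover have "x \<in> orb H x" using orb_self[OF Hs xP] .
    ultimately have "orb H x = C" using CC_disj[OF _ C _ x] by blast
    then have "y \<in> orb H x" using y by simp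
    then show "\<exists>h\<in>H. h x = y" unfolding orb_def by blast
  qed
  then show ?thesis by blast
qed

end


lemma (in group) cj_pow:
  assumes g: "g \<in> carrier G" and x: "x \<in> carrier G"
  shows "(g \<otimes> x \<otimes> inv g) [^] (n::nat) = g \<otimes> x [^] n \<otimes> inv g"
proof (induction n)
  case 0 then show ?case using g by simp
next
  case (Suc n)
  have "(g \<otimes> x \<otimes> inv g) [^] Suc n = (g \<otimes> x [^] n \<otimes> inv g) \<otimes> (g \<otimes> x \<otimes> inv g)"
    using Suc by simp
  also have "\<dots> = g \<otimes> (x [^] n \<otimes> x) \<otimes> inv g" using cj_mult[OF g nat_pow_closed[OF x] x] by simp
  finally show ?case by simp
qed

lemma (in group) subgroup_nat_pow_closed:
  assumes "subgroup H G" "h \<in> H" shows "h [^] (n::nat) \<in> H"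
proof -
  have "h \<in> carrier G" using assms subgroup.subset by blast
  then have "h [^] (int n) = h [^] n" by (simp add: int_pow_int)
  then show ?thesis using subgroup_int_pow_closed[OF assms, of "int n"] by simp
qed

context setting begin

lemma BG_mult_outside:
  assumes "a \<in> carrier SP" "b \<in> carrier SP" "x \<notin> P"
  shows "(a \<otimes>\<^bsub>SP\<^esub> b) x = undefined"
  using assms by (simp add: BijGroup_def compose_def)

lemma BG_outside: "a \<in> carrier SP \<Longrightarrow> x \<notin> P \<Longrightarrow> a x = undefined"
  using Bij_imp_extensional[of a P] by (auto simp: BijGroup_def extensional_def)

lemma agree:
  assumes A: "A \<subseteq> KK" and Acomm: "\<And>a b. a \<in> A \<Longrightarrow> b \<in> A \<Longrightarrow> a \<otimes>\<^bsub>SP\<^esub> b = b \<otimes>\<^bsub>SP\<^esub> a"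
    and C: "C \<in> CC" and tr: "\<And>x y. x \<in> C \<Longrightarrow> y \<in> C \<Longrightarrow> \<exists>a\<in>A. a x = y"
    and f: "f \<in> KK" and fcomm: "\<And>a. a \<in> A \<Longrightarrow> f \<otimes>\<^bsub>SP\<^esub> a = a \<otimes>\<^bsub>SP\<^esub> f"
  shows "\<exists>a\<in>A. \<forall>x\<in>C. f x = a x"
proof -
  obtain x0 where x0: "x0 \<in> C" using CC_ne[OF C] by blast
  have x0P: "x0 \<in> P" using CC_sub[OF C] x0 by blast
  have fx0: "f x0 \<in> C" using K_pres[OF f C x0] .
  obtain a where a: "a \<in> A" "a x0 = f x0" using tr[OF x0 fx0] by blast
  have fc: "f \<in> carrier SP" using K_mem_SP[OF f] .
  have ac: "a \<in> carrier SP" using K_mem_SP a A by blast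
  have "f y = a y" if y: "y \<in> C" for y
  proof -
    obtain b where b: "b \<in> A" "b x0 = y" using tr[OF x0 y] by blast
    have bc: "b \<in> carrier SP" using K_mem_SP b A by blast
    have "f y = (f \<otimes>\<^bsub>SP\<^esub> b) x0" using BG_mult_apply[OF fc bc x0P] b by simp
    also have "\<dots> = (b \<otimes>\<^bsub>SP\<^esub> f) x0" using fcomm[OF b(1)] by simp
    also have "\<dots> = b (a x0)" using BG_mult_apply[OF bc fc x0P] a by simp
    also have "\<dots> = (b \<otimes>\<^bsub>SP\<^esub> a) x0" using BG_mult_apply[OF bc ac x0P] by simp
    also have "\<dots> = (a \<otimes>\<^bsub>SP\<^esub> b) x0" using Acomm[OF b(1) a(1)] by simp
    also have "\<dots> = a y" using BG_mult_apply[OF ac bc x0P] b by simp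
    finally show ?thesis .
  qed
  then show ?thesis using a by blast
qed

lemma abelian_from_agree:
  assumes H: "H \<subseteq> KK" and Z: "Z \<subseteq> KK"
    and Zcomm: "\<And>a b. a \<in> Z \<Longrightarrow> b \<in> Z \<Longrightarrow> a \<otimes>\<^bsub>SP\<^esub> b = b \<otimes>\<^bsub>SP\<^esub> a"
    and ag: "\<And>h C. h \<in> H \<Longrightarrow> C \<in> CC \<Longrightarrow> \<exists>z\<in>Z. \<forall>x\<in>C. h x = z x"
    and h1: "h1 \<in> H" and h2: "h2 \<in> H"
  shows "h1 \<otimes>\<^bsub>SP\<^esub> h2 = h2 \<otimes>\<^bsub>SP\<^esub> h1"
proof -
  have c1: "h1 \<in> carrier SP" and c2: "h2 \<in> carrier SP" using h1 h2 H K_mem_SP by blast+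
  show ?thesis
  proof (rule BG_eqI[OF BG.m_closed[OF c1 c2] BG.m_closed[OF c2 c1]])
    fix x assume x: "x \<in> P"
    obtain C where C: "C \<in> CC" "x \<in> C" using CC_cover[OF x] by blast
    obtain z1 where z1: "z1 \<in> Z" "\<forall>x\<in>C. h1 x = z1 x" using ag[OF h1 C(1)] by blast
    obtain z2 where z2: "z2 \<in> Z" "\<forall>x\<in>C. h2 x = z2 x" using ag[OF h2 C(1)] by blast
    have z1K: "z1 \<in> KK" and z2K: "z2 \<in> KK" using z1 z2 Z by blast+
    have zc1: "z1 \<in> carrier SP" and zc2: "z2 \<in> carrier SP" using z1K z2K K_mem_SP by blast+
    have "(h1 \<otimes>\<^bsub>SP\<^esub> h2) x = h1 (h2 x)" using BG_mult_apply[OF c1 c2 x] .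
    also have "\<dots> = z1 (z2 x)" using z1 z2 C K_pres[OF z2K C(1) C(2)] by simp
    also have "\<dots> = (z1 \<otimes>\<^bsub>SP\<^esub> z2) x" using BG_mult_apply[OF zc1 zc2 x] by simp
    also have "\<dots> = (z2 \<otimes>\<^bsub>SP\<^esub> z1) x" using Zcomm[OF z1(1) z2(1)] by simp
    also have "\<dots> = z2 (z1 x)" using BG_mult_apply[OF zc2 zc1 x] by simp
    also have "\<dots> = h2 (h1 x)" using z1 z2 C K_pres[OF z1K C(1) C(2)] by simp
    also have "\<dots> = (h2 \<otimes>\<^bsub>SP\<^esub> h1) x" using BG_mult_apply[OF c2 c1 x] by simp
    finally show "(h1 \<otimes>\<^bsub>SP\<^esub> h2) x = (h2 \<otimes>\<^bsub>SP\<^esub> h1) x" .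
  qed
qed

lemma pow_agree:
  assumes f: "f \<in> carrier SP" and z: "z \<in> KK" and C: "C \<in> CC" and ag: "\<forall>x\<in>C. f x = z x"
  shows "\<forall>x\<in>C. (f [^]\<^bsub>SP\<^esub> (n::nat)) x = (z [^]\<^bsub>SP\<^esub> n) x"
proof (induction n)
  case 0 then show ?case by simp
next
  case (Suc n)
  have zc: "z \<in> carrier SP" using K_mem_SP[OF z] .
  show ?case
  proof
    fix x assume x: "x \<in> C"
    have xP: "x \<in> P" using CC_sub[OF C] x by blast
    have zx: "z x \<in> C" using K_pres[OF z C x] .
    have "(f [^]\<^bsub>SP\<^esub> Suc n) x = (f [^]\<^bsub>SP\<^esub> n) (f x)"
      using BG_mult_apply[OF BG.nat_pow_closed[OF f] f xP] by simp
    also have "\<dots> = (z [^]\<^bsub>SP\<^esub> n) (z x)" using ag x Suc zx by simp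
    also have "\<dots> = (z [^]\<^bsub>SP\<^esub> Suc n) x"
      using BG_mult_apply[OF BG.nat_pow_closed[OF zc] zc xP] by simp
    finally show "(f [^]\<^bsub>SP\<^esub> Suc n) x = (z [^]\<^bsub>SP\<^esub> Suc n) x" .
  qed
qed

lemma centr_invsub:
  assumes Hs: "invsub SP G Hs"
  shows "invsub SP G (centraliser P G Hs \<inter> KK)"
proof -
  have HsS: "subgroup Hs SP" using Hs unfolding invsub_def by blast
  let ?Z = "centraliser P G Hs \<inter> KK"
  have Zchar: "a \<in> ?Z \<longleftrightarrow> a \<in> KK \<and> (\<forall>h\<in>Hs. a \<otimes>\<^bsub>SP\<^esub> h = h \<otimes>\<^bsub>SP\<^esub> a)" for a
    unfolding centraliser_def using K_sub_G by blast
  have sub: "subgroup ?Z SP"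
  proof (rule BG.subgroupI)
    show "?Z \<subseteq> carrier SP" using Zchar K_mem_SP by blast
    have "\<one>\<^bsub>SP\<^esub> \<in> KK" using subgroup.one_closed[OF K_subgroup] .
    moreover have "\<forall>h\<in>Hs. \<one>\<^bsub>SP\<^esub> \<otimes>\<^bsub>SP\<^esub> h = h \<otimes>\<^bsub>SP\<^esub> \<one>\<^bsub>SP\<^esub>"
      using sub_mem[OF HsS] by simp
    ultimately show "?Z \<noteq> {}" using Zchar by blast
  next
    fix a assume a: "a \<in> ?Z"
    have aK: "a \<in> KK" and ac: "\<forall>h\<in>Hs. a \<otimes>\<^bsub>SP\<^esub> h = h \<otimes>\<^bsub>SP\<^esub> a" using a Zchar by blast+
    have acar: "a \<in> carrier SP" using K_mem_SP[OF aK] .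
    have "inv\<^bsub>SP\<^esub> a \<in> KK" using subgroup.m_inv_closed[OF K_subgroup aK] .
    moreover have "inv\<^bsub>SP\<^esub> a \<otimes>\<^bsub>SP\<^esub> h = h \<otimes>\<^bsub>SP\<^esub> inv\<^bsub>SP\<^esub> a" if h: "h \<in> Hs" for h
    proof -
      have hc: "h \<in> carrier SP" using sub_mem[OF HsS h] .
      have "inv\<^bsub>SP\<^esub> a \<otimes>\<^bsub>SP\<^esub> h = inv\<^bsub>SP\<^esub> a \<otimes>\<^bsub>SP\<^esub> (h \<otimes>\<^bsub>SP\<^esub> a) \<otimes>\<^bsub>SP\<^esub> inv\<^bsub>SP\<^esub> a"
        using acar hc by (simp add: BG.m_assoc)
      also have "\<dots> = inv\<^bsub>SP\<^esub> a \<otimes>\<^bsub>SP\<^esub> (a \<otimes>\<^bsub>SP\<^esub> h) \<otimes>\<^bsub>SP\<^esub> inv\<^bsub>SP\<^esub> a" using ac h by simp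
      also have "\<dots> = h \<otimes>\<^bsub>SP\<^esub> inv\<^bsub>SP\<^esub> a" using acar hc by (simp add: BG.m_assoc[symmetric])
      finally show ?thesis .
    qed
    ultimately show "inv\<^bsub>SP\<^esub> a \<in> ?Z" using Zchar by blast
  next
    fix a b assume a: "a \<in> ?Z" and b: "b \<in> ?Z"
    have aK: "a \<in> KK" and ac: "\<forall>h\<in>Hs. a \<otimes>\<^bsub>SP\<^esub> h = h \<otimes>\<^bsub>SP\<^esub> a" using a Zchar by blast+
    have bK: "b \<in> KK" and bc: "\<forall>h\<in>Hs. b \<otimes>\<^bsub>SP\<^esub> h = h \<otimes>\<^bsub>SP\<^esub> b" using b Zchar by blast+
    have acar: "a \<in> carrier SP" and bcar: "b \<in> carrier SP" using K_mem_SP aK bK by blast+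
    have "a \<otimes>\<^bsub>SP\<^esub> b \<in> KK" using subgroup.m_closed[OF K_subgroup aK bK] .
    moreover have "(a \<otimes>\<^bsub>SP\<^esub> b) \<otimes>\<^bsub>SP\<^esub> h = h \<otimes>\<^bsub>SP\<^esub> (a \<otimes>\<^bsub>SP\<^esub> b)" if h: "h \<in> Hs" for h
    proof -
      have hc: "h \<in> carrier SP" using sub_mem[OF HsS h] .
      have "(a \<otimes>\<^bsub>SP\<^esub> b) \<otimes>\<^bsub>SP\<^esub> h = a \<otimes>\<^bsub>SP\<^esub> (b \<otimes>\<^bsub>SP\<^esub> h)" using acar bcar hc by (simp add: BG.m_assoc)
      also have "\<dots> = a \<otimes>\<^bsub>SP\<^esub> (h \<otimes>\<^bsub>SP\<^esub> b)" using bc h by simp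
      also have "\<dots> = (a \<otimes>\<^bsub>SP\<^esub> h) \<otimes>\<^bsub>SP\<^esub> b" using acar bcar hc by (simp add: BG.m_assoc)
      also have "\<dots> = (h \<otimes>\<^bsub>SP\<^esub> a) \<otimes>\<^bsub>SP\<^esub> b" using ac h by simp
      also have "\<dots> = h \<otimes>\<^bsub>SP\<^esub> (a \<otimes>\<^bsub>SP\<^esub> b)" using acar bcar hc by (simp add: BG.m_assoc)
      finally show ?thesis .
    qed
    ultimately show "a \<otimes>\<^bsub>SP\<^esub> b \<in> ?Z" using Zchar by blast
  qed
  have "g \<otimes>\<^bsub>SP\<^esub> a \<otimes>\<^bsub>SP\<^esub> inv\<^bsub>SP\<^esub> g \<in> ?Z" if g: "g \<in> G" and a: "a \<in> ?Z" for g a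
  proof -
    have aK: "a \<in> KK" and ac: "\<forall>h\<in>Hs. a \<otimes>\<^bsub>SP\<^esub> h = h \<otimes>\<^bsub>SP\<^esub> a" using a Zchar by blast+
    have acar: "a \<in> carrier SP" using K_mem_SP[OF aK] .
    have gc: "g \<in> carrier SP" using G_mem[OF g] .
    have igG: "inv\<^bsub>SP\<^esub> g \<in> G" using G_inv[OF g] .
    have "g \<otimes>\<^bsub>SP\<^esub> a \<otimes>\<^bsub>SP\<^esub> inv\<^bsub>SP\<^esub> g \<in> KK" using K_invsub g aK unfolding invsub_def by blast
    moreover have "(g \<otimes>\<^bsub>SP\<^esub> a \<otimes>\<^bsub>SP\<^esub> inv\<^bsub>SP\<^esub> g) \<otimes>\<^bsub>SP\<^esub> h = h \<otimes>\<^bsub>SP\<^esub> (g \<otimes>\<^bsub>SP\<^esub> a \<otimes>\<^bsub>SP\<^esub> inv\<^bsub>SP\<^esub> g)"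
      if h: "h \<in> Hs" for h
    proof -
      have hc: "h \<in> carrier SP" using sub_mem[OF HsS h] .
      define h' where "h' = inv\<^bsub>SP\<^esub> g \<otimes>\<^bsub>SP\<^esub> h \<otimes>\<^bsub>SP\<^esub> inv\<^bsub>SP\<^esub> (inv\<^bsub>SP\<^esub> g)"
      have h'H: "h' \<in> Hs" using Hs igG h unfolding invsub_def h'_def by blast
      have h'c: "h' \<in> carrier SP" using sub_mem[OF HsS h'H] .
      have hh': "h = g \<otimes>\<^bsub>SP\<^esub> h' \<otimes>\<^bsub>SP\<^esub> inv\<^bsub>SP\<^esub> g" unfolding h'_def using BG.cj_cancel2[OF gc hc] by simp
      have "(g \<otimes>\<^bsub>SP\<^esub> a \<otimes>\<^bsub>SP\<^esub> inv\<^bsub>SP\<^esub> g) \<otimes>\<^bsub>SP\<^esub> h = g \<otimes>\<^bsub>SP\<^esub> (a \<otimes>\<^bsub>SP\<^esub> h') \<otimes>\<^bsub>SP\<^esub> inv\<^bsub>SP\<^esub> g"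
        using hh' BG.cj_mult[OF gc acar h'c] by simp
      also have "\<dots> = g \<otimes>\<^bsub>SP\<^esub> (h' \<otimes>\<^bsub>SP\<^esub> a) \<otimes>\<^bsub>SP\<^esub> inv\<^bsub>SP\<^esub> g" using ac h'H by simp
      also have "\<dots> = h \<otimes>\<^bsub>SP\<^esub> (g \<otimes>\<^bsub>SP\<^esub> a \<otimes>\<^bsub>SP\<^esub> inv\<^bsub>SP\<^esub> g)"
        using hh' BG.cj_mult[OF gc h'c acar] by simp
      finally show ?thesis .
    qed
    ultimately show ?thesis using Zchar by blast
  qed
  then show ?thesis unfolding invsub_def using sub by blast
qed

lemma K_invsub_K: "invsub SP KK KK"
  unfolding invsub_def
proof (intro conjI ballI)
  show "subgroup KK SP" by (rule K_subgroup)
  fix k a assume "k \<in> KK" "a \<in> KK"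
  then show "k \<otimes>\<^bsub>SP\<^esub> a \<otimes>\<^bsub>SP\<^esub> inv\<^bsub>SP\<^esub> k \<in> KK"
    by (meson K_subgroup subgroup.m_closed subgroup.m_inv_closed)
qed

lemma invsub_G_K:
  assumes "invsub SP G H" shows "invsub SP KK H"
  unfolding invsub_def
proof (intro conjI ballI)
  show "subgroup H SP" using assms unfolding invsub_def by (rule conjunct1)
  fix k a assume k: "k \<in> KK" and a: "a \<in> H"
  have "k \<in> G" using K_sub_G k by (rule subsetD)
  then show "k \<otimes>\<^bsub>SP\<^esub> a \<otimes>\<^bsub>SP\<^esub> inv\<^bsub>SP\<^esub> k \<in> H"
    using assms a unfolding invsub_def by blast
qed

lemma mininv_KK_exists: "\<exists>T. mininv SP KK KK T"
  using BG.mininv_exists[OF finSP K_invsub_K K_nontriv] .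

definition Soc where "Soc = generate SP (\<Union>{M. mininv SP KK KK M})"

lemma Soc_eq: "socle P KK = Soc"
  unfolding Soc_def using socle_eq[OF K_subgroup] .

lemma Soc_sub_K: "Soc \<subseteq> KK"
  unfolding Soc_def
proof (rule BG.generate_subgroup_incl[OF _ K_subgroup])
  show "\<Union>{M. mininv SP KK KK M} \<subseteq> KK" unfolding mininv_def by blast
qed

lemma mininv_sub_Soc:
  assumes T: "mininv SP KK KK T" shows "T \<subseteq> Soc"
proof
  fix x assume "x \<in> T"
  then have "x \<in> \<Union>{M. mininv SP KK KK M}" using T by blast
  then show "x \<in> Soc" unfolding Soc_def by (rule generate.incl)
qed

lemma Soc_invsub: "invsub SP G Soc"
  unfolding Soc_def
proof (rule BG.invsub_generate)
  show "G \<subseteq> carrier SP" by (rule G_sub)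
  show "\<Union>{M. mininv SP KK KK M} \<subseteq> carrier SP" using K_mem_SP unfolding mininv_def by blast
  fix g h assume g: "g \<in> G" and h: "h \<in> \<Union>{M. mininv SP KK KK M}"
  then obtain T where T: "mininv SP KK KK T" "h \<in> T" by blast
  have gc: "g \<in> carrier SP" using G_mem[OF g] .
  have igG: "inv\<^bsub>SP\<^esub> g \<in> G" using G_inv[OF g] .
  have Kg: "inv\<^bsub>SP\<^esub> g \<otimes>\<^bsub>SP\<^esub> k \<otimes>\<^bsub>SP\<^esub> g \<in> KK" if k: "k \<in> KK" for k
  proof -
    have "inv\<^bsub>SP\<^esub> g \<otimes>\<^bsub>SP\<^esub> k \<otimes>\<^bsub>SP\<^esub> inv\<^bsub>SP\<^esub> (inv\<^bsub>SP\<^esub> g) \<in> KK"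
      using K_invsub igG k unfolding invsub_def by blast
    then show ?thesis using gc by simp
  qed
  have Kg2: "g \<otimes>\<^bsub>SP\<^esub> k \<otimes>\<^bsub>SP\<^esub> inv\<^bsub>SP\<^esub> g \<in> KK" if k: "k \<in> KK" for k
    using K_invsub g k unfolding invsub_def by blast
  have "mininv SP KK KK (BG.cj g T)"
    using BG.mininv_cj[OF gc _ Kg Kg2 T(1)] K_mem_SP by blast
  moreover have "g \<otimes>\<^bsub>SP\<^esub> h \<otimes>\<^bsub>SP\<^esub> inv\<^bsub>SP\<^esub> g \<in> BG.cj g T" unfolding BG.cj_def using T(2) by blast
  ultimately show "g \<otimes>\<^bsub>SP\<^esub> h \<otimes>\<^bsub>SP\<^esub> inv\<^bsub>SP\<^esub> g \<in> \<Union>{M. mininv SP KK KK M}" by blast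
qed

lemma Soc_nontriv: "Soc \<noteq> {\<one>\<^bsub>SP\<^esub>}"
proof
  assume S1: "Soc = {\<one>\<^bsub>SP\<^esub>}"
  obtain T where T: "mininv SP KK KK T" using mininv_KK_exists by blast
  have "T \<subseteq> {\<one>\<^bsub>SP\<^esub>}" using mininv_sub_Soc[OF T] S1 by simp
  moreover have "\<one>\<^bsub>SP\<^esub> \<in> T" using T unfolding mininv_def invsub_def by (blast intro: subgroup.one_closed)
  moreover have "T \<noteq> {\<one>\<^bsub>SP\<^esub>}" using T unfolding mininv_def by blast
  ultimately show False by blast
qed

end


context setting begin

lemma elem_ab:
  assumes A: "invsub SP G A" and AK: "A \<subseteq> KK"
    and Acomm: "\<And>a b. a \<in> A \<Longrightarrow> b \<in> A \<Longrightarrow> a \<otimes>\<^bsub>SP\<^esub> b = b \<otimes>\<^bsub>SP\<^esub> a"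
    and nt: "A \<noteq> {\<one>\<^bsub>SP\<^esub>}"
  shows "\<exists>p::nat. Factorial_Ring.prime p \<and> (\<forall>x\<in>A. x [^]\<^bsub>SP\<^esub> p = \<one>\<^bsub>SP\<^esub>)"
proof -
  have As: "subgroup A SP" using A unfolding invsub_def by blast
  have oneA: "\<one>\<^bsub>SP\<^esub> \<in> A" using subgroup.one_closed[OF As] .
  obtain a where a: "a \<in> A" "a \<noteq> \<one>\<^bsub>SP\<^esub>" using nt oneA by blast
  have ac: "a \<in> carrier SP" using sub_mem[OF As a(1)] .
  define n where "n = BG.ord a"
  have n1: "n \<ge> 1" unfolding n_def using BG.ord_ge_1[OF finSP ac] .
  have nn1: "n \<noteq> 1" unfolding n_def using BG.ord_eq_1[OF ac] a(2) by simp
  obtain p :: nat where p: "Factorial_Ring.prime p" "p dvd n" using prime_factor_nat[OF nn1] by blast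
  obtain k where k: "n = p * k" using p(2) by blast
  have k0: "k \<noteq> 0" using k n1 by auto
  have kdvd: "k dvd BG.ord a" using k n_def by simp
  define b where "b = a [^]\<^bsub>SP\<^esub> k"
  have ordb: "BG.ord b = p" unfolding b_def using BG.ord_pow[OF ac kdvd k0] k n_def k0 by simp
  have bA: "b \<in> A" unfolding b_def using BG.subgroup_nat_pow_closed[OF As a(1)] .
  have bc: "b \<in> carrier SP" using sub_mem[OF As bA] .
  have b1: "b \<noteq> \<one>\<^bsub>SP\<^esub>" using ordb BG.ord_eq_1[OF bc] p(1) by (metis not_prime_1)
  have bp: "b [^]\<^bsub>SP\<^esub> p = \<one>\<^bsub>SP\<^esub>" using BG.pow_ord_eq_1[OF bc] ordb by simp
  define Ap where "Ap = {x\<in>A. x [^]\<^bsub>SP\<^esub> p = \<one>\<^bsub>SP\<^esub>}"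
  have ApA: "Ap \<subseteq> A" unfolding Ap_def by blast
  have Aps: "subgroup Ap SP"
  proof (rule BG.subgroupI)
    show "Ap \<subseteq> carrier SP" using ApA sub_mem[OF As] by blast
    have "\<one>\<^bsub>SP\<^esub> \<in> Ap" unfolding Ap_def using oneA by simp
    then show "Ap \<noteq> {}" by blast
  next
    fix x assume x: "x \<in> Ap"
    have xA: "x \<in> A" and xp: "x [^]\<^bsub>SP\<^esub> p = \<one>\<^bsub>SP\<^esub>" using x unfolding Ap_def by blast+
    have xc: "x \<in> carrier SP" using sub_mem[OF As xA] .
    have "inv\<^bsub>SP\<^esub> x \<in> A" using subgroup.m_inv_closed[OF As xA] .
    moreover have "(inv\<^bsub>SP\<^esub> x) [^]\<^bsub>SP\<^esub> p = \<one>\<^bsub>SP\<^esub>" using BG.nat_pow_inv[OF xc, of p] xp by simp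
    ultimately show "inv\<^bsub>SP\<^esub> x \<in> Ap" unfolding Ap_def by blast
  next
    fix x y assume x: "x \<in> Ap" and y: "y \<in> Ap"
    have xA: "x \<in> A" and xp: "x [^]\<^bsub>SP\<^esub> p = \<one>\<^bsub>SP\<^esub>" using x unfolding Ap_def by blast+
    have yA: "y \<in> A" and yp: "y [^]\<^bsub>SP\<^esub> p = \<one>\<^bsub>SP\<^esub>" using y unfolding Ap_def by blast+
    have xc: "x \<in> carrier SP" using sub_mem[OF As xA] .
    have yc: "y \<in> carrier SP" using sub_mem[OF As yA] .
    have "x \<otimes>\<^bsub>SP\<^esub> y \<in> A" using subgroup.m_closed[OF As xA yA] .
    moreover have "(x \<otimes>\<^bsub>SP\<^esub> y) [^]\<^bsub>SP\<^esub> p = \<one>\<^bsub>SP\<^esub>"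
      using BG.pow_mult_distrib[OF Acomm[OF xA yA] xc yc, of p] xp yp by simp
    ultimately show "x \<otimes>\<^bsub>SP\<^esub> y \<in> Ap" unfolding Ap_def by blast
  qed
  have Apinv: "invsub SP G Ap"
    unfolding invsub_def
  proof (intro conjI ballI)
    show "subgroup Ap SP" by (rule Aps)
    fix g x assume g: "g \<in> G" and x: "x \<in> Ap"
    have xA: "x \<in> A" and xp: "x [^]\<^bsub>SP\<^esub> p = \<one>\<^bsub>SP\<^esub>" using x unfolding Ap_def by blast+
    have xc: "x \<in> carrier SP" using sub_mem[OF As xA] .
    have gc: "g \<in> carrier SP" using G_mem[OF g] .
    have "g \<otimes>\<^bsub>SP\<^esub> x \<otimes>\<^bsub>SP\<^esub> inv\<^bsub>SP\<^esub> g \<in> A" using A g xA unfolding invsub_def by blast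
    moreover have "(g \<otimes>\<^bsub>SP\<^esub> x \<otimes>\<^bsub>SP\<^esub> inv\<^bsub>SP\<^esub> g) [^]\<^bsub>SP\<^esub> p = \<one>\<^bsub>SP\<^esub>"
      using BG.cj_pow[OF gc xc, of p] xp gc by simp
    ultimately show "g \<otimes>\<^bsub>SP\<^esub> x \<otimes>\<^bsub>SP\<^esub> inv\<^bsub>SP\<^esub> g \<in> Ap" unfolding Ap_def by blast
  qed
  have ApK: "Ap \<subseteq> KK" using ApA AK by (rule subset_trans)
  have bAp: "b \<in> Ap" unfolding Ap_def using bA bp by blast
  have "Ap \<noteq> {\<one>\<^bsub>SP\<^esub>}" using bAp b1 by blast
  then have tr: "\<forall>C\<in>CC. \<forall>x\<in>C. \<forall>y\<in>C. \<exists>h\<in>Ap. h x = y" using dichotomy[OF Apinv ApK] by blast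
  have "y [^]\<^bsub>SP\<^esub> p = \<one>\<^bsub>SP\<^esub>" if y: "y \<in> A" for y
  proof -
    have yc: "y \<in> carrier SP" using sub_mem[OF As y] .
    have yK: "y \<in> KK" using y AK by blast
    show ?thesis
    proof (rule BG_eqI[OF BG.nat_pow_closed[OF yc] BG.one_closed])
      fix x assume x: "x \<in> P"
      obtain C where C: "C \<in> CC" "x \<in> C" using CC_cover[OF x] by blast
      have "\<exists>z\<in>Ap. \<forall>x\<in>C. y x = z x"
      proof (rule agree[OF ApK _ C(1) _ yK])
        show "\<And>a b. a \<in> Ap \<Longrightarrow> b \<in> Ap \<Longrightarrow> a \<otimes>\<^bsub>SP\<^esub> b = b \<otimes>\<^bsub>SP\<^esub> a" using Acomm ApA by blast
        show "\<And>x y. x \<in> C \<Longrightarrow> y \<in> C \<Longrightarrow> \<exists>a\<in>Ap. a x = y" using tr C(1) by blast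
        show "\<And>a. a \<in> Ap \<Longrightarrow> y \<otimes>\<^bsub>SP\<^esub> a = a \<otimes>\<^bsub>SP\<^esub> y" using Acomm ApA y by blast
      qed
      then obtain z where z: "z \<in> Ap" "\<forall>x\<in>C. y x = z x" by blast
      have zK: "z \<in> KK" using z(1) ApK by blast
      have "(y [^]\<^bsub>SP\<^esub> p) x = (z [^]\<^bsub>SP\<^esub> p) x" using pow_agree[OF yc zK C(1) z(2)] C(2) by blast
      also have "\<dots> = \<one>\<^bsub>SP\<^esub> x" using z(1) unfolding Ap_def by simp
      finally show "(y [^]\<^bsub>SP\<^esub> p) x = \<one>\<^bsub>SP\<^esub> x" .
    qed
  qed
  then show ?thesis using p(1) by blast
qed

lemma K_sub_Soc:
  assumes Kcomm: "\<And>a b. a \<in> KK \<Longrightarrow> b \<in> KK \<Longrightarrow> a \<otimes>\<^bsub>SP\<^esub> b = b \<otimes>\<^bsub>SP\<^esub> a"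
    and p: "Factorial_Ring.prime (p::nat)" and Kp: "\<forall>x\<in>KK. x [^]\<^bsub>SP\<^esub> p = \<one>\<^bsub>SP\<^esub>"
  shows "KK \<subseteq> Soc"
proof
  fix x assume xK: "x \<in> KK"
  show "x \<in> Soc"
  proof (cases "x = \<one>\<^bsub>SP\<^esub>")
    case True then show ?thesis unfolding Soc_def using generate.one by simp
  next
    case False
    have xc: "x \<in> carrier SP" using K_mem_SP[OF xK] .
    define H where "H = generate SP {x}"
    have Hinv: "invsub SP KK H" unfolding H_def
    proof (rule BG.invsub_generate)
      show "KK \<subseteq> carrier SP" using K_mem_SP by blast
      show "{x} \<subseteq> carrier SP" using xc by blast
      fix k h assume k: "k \<in> KK" and h: "h \<in> {x}"
      have kc: "k \<in> carrier SP" using K_mem_SP[OF k] .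
      have "k \<otimes>\<^bsub>SP\<^esub> x \<otimes>\<^bsub>SP\<^esub> inv\<^bsub>SP\<^esub> k = x \<otimes>\<^bsub>SP\<^esub> k \<otimes>\<^bsub>SP\<^esub> inv\<^bsub>SP\<^esub> k" using Kcomm[OF k xK] by simp
      also have "\<dots> = x" using kc xc by (simp add: BG.m_assoc)
      finally show "k \<otimes>\<^bsub>SP\<^esub> h \<otimes>\<^bsub>SP\<^esub> inv\<^bsub>SP\<^esub> k \<in> {x}" using h by simp
    qed
    have HK: "H \<subseteq> KK" unfolding H_def using BG.generate_subgroup_incl[OF _ K_subgroup] xK by blast
    have xH: "x \<in> H" unfolding H_def by (rule generate.incl) simp
    have "H \<noteq> {\<one>\<^bsub>SP\<^esub>}" using xH False by blast
    then obtain T where T: "mininv SP KK H T" using BG.mininv_exists[OF finSP Hinv] by blast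
    have TK: "mininv SP KK KK T" using T HK unfolding mininv_def by blast
    have Ts: "subgroup T SP" using T unfolding mininv_def invsub_def by blast
    have "T \<noteq> {\<one>\<^bsub>SP\<^esub>}" using T unfolding mininv_def by blast
    moreover have "\<one>\<^bsub>SP\<^esub> \<in> T" using subgroup.one_closed[OF Ts] .
    ultimately obtain y where y: "y \<in> T" "y \<noteq> \<one>\<^bsub>SP\<^esub>" by blast
    have "y \<in> H" using y(1) T unfolding mininv_def by blast
    then obtain i :: int where i: "y = x [^]\<^bsub>SP\<^esub> i" unfolding H_def BG.generate_pow[OF xc] by blast
    have "BG.ord x dvd p" using BG.pow_eq_id[OF xc] Kp xK by blast
    moreover have "BG.ord x \<noteq> 1" using BG.ord_eq_1[OF xc] False by simp
    ultimately have ordx: "BG.ord x = p" using p prime_nat_iff by blast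
    have ndvd: "\<not> int p dvd i" using BG.int_pow_eq_id[OF xc, of i] ordx i y(2) by simp
    have "Factorial_Ring.prime (int p)" using p by simp
    then have "coprime (int p) i" using prime_imp_coprime ndvd by blast
    then have "gcd i (int p) = 1" by (simp add: coprime_iff_gcd_eq_1 gcd.commute)
    then obtain u v where uv: "u * i + v * int p = 1" using bezout_int[of i "int p"] by auto
    have "x [^]\<^bsub>SP\<^esub> (i * u) = x [^]\<^bsub>SP\<^esub> (1::int)"
    proof -
      have "int p dvd (1 - i * u)" using uv by (metis add_diff_cancel_left' dvd_triv_right mult.commute)
      then show ?thesis using BG.int_pow_eq[OF xc] ordx by simp
    qed
    then have "y [^]\<^bsub>SP\<^esub> u = x" using i BG.int_pow_pow[OF xc] BG.int_pow_1[OF xc] by simp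
    moreover have "y [^]\<^bsub>SP\<^esub> u \<in> T" using BG.subgroup_int_pow_closed[OF Ts y(1)] .
    ultimately have "x \<in> T" by simp
    then show ?thesis using mininv_sub_Soc[OF TK] by blast
  qed
qed

end


context setting begin

definition rst :: "'a set \<Rightarrow> ('a \<Rightarrow> 'a) \<Rightarrow> ('a \<Rightarrow> 'a)" where
  "rst C f = (\<lambda>x. if x \<in> C then f x else if x \<in> P then x else undefined)"

lemma rst_in: "x \<in> C \<Longrightarrow> rst C f x = f x" unfolding rst_def by simp
lemma rst_out: "x \<in> P \<Longrightarrow> x \<notin> C \<Longrightarrow> rst C f x = x" unfolding rst_def by simp

lemma K_pres_inv:
  assumes k: "k \<in> KK" and C: "C \<in> CC" and x: "x \<in> P" and kx: "k x \<in> C"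
  shows "x \<in> C"
proof -
  have ik: "inv\<^bsub>SP\<^esub> k \<in> KK" using subgroup.m_inv_closed[OF K_subgroup k] .
  have "(inv\<^bsub>SP\<^esub> k) (k x) \<in> C" using K_pres[OF ik C kx] .
  then show ?thesis using BG_inv_apply1[OF K_mem_SP[OF k] x] by simp
qed

lemma rst_carrier:
  assumes C: "C \<in> CC" and f: "f \<in> KK"
  shows "rst C f \<in> carrier SP"
proof -
  have fc: "f \<in> carrier SP" using K_mem_SP[OF f] .
  have if': "inv\<^bsub>SP\<^esub> f \<in> KK" using subgroup.m_inv_closed[OF K_subgroup f] .
  have CP: "C \<subseteq> P" using CC_sub[OF C] .
  have ext: "rst C f \<in> extensional P" unfolding rst_def extensional_def using CP by auto
  have l: "\<forall>a\<in>P. rst C (inv\<^bsub>SP\<^esub> f) (rst C f a) = a"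
  proof
    fix a assume a: "a \<in> P"
    show "rst C (inv\<^bsub>SP\<^esub> f) (rst C f a) = a"
    proof (cases "a \<in> C")
      case True
      have "f a \<in> C" using K_pres[OF f C True] .
      then show ?thesis using True rst_in BG_inv_apply1[OF fc a] by simp
    next
      case False then show ?thesis using a rst_out by simp
    qed
  qed
  have r: "\<forall>a\<in>P. rst C f (rst C (inv\<^bsub>SP\<^esub> f) a) = a"
  proof
    fix a assume a: "a \<in> P"
    show "rst C f (rst C (inv\<^bsub>SP\<^esub> f) a) = a"
    proof (cases "a \<in> C")
      case True
      have "(inv\<^bsub>SP\<^esub> f) a \<in> C" using K_pres[OF if' C True] .
      then show ?thesis using True rst_in BG_inv_apply2[OF fc a] by simp
    next
      case False then show ?thesis using a rst_out by simp
    qed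
  qed
  have i1: "rst C f ` P \<subseteq> P"
  proof
    fix y assume "y \<in> rst C f ` P"
    then obtain a where a: "a \<in> P" "y = rst C f a" by blast
    show "y \<in> P"
    proof (cases "a \<in> C")
      case True then show ?thesis using a rst_in BG_closed[OF fc a(1)] by simp
    next
      case False then show ?thesis using a rst_out by simp
    qed
  qed
  have i2: "rst C (inv\<^bsub>SP\<^esub> f) ` P \<subseteq> P"
  proof
    fix y assume "y \<in> rst C (inv\<^bsub>SP\<^esub> f) ` P"
    then obtain a where a: "a \<in> P" "y = rst C (inv\<^bsub>SP\<^esub> f) a" by blast
    show "y \<in> P"
    proof (cases "a \<in> C")
      case True then show ?thesis using a rst_in BG_closed[OF K_mem_SP[OF if'] a(1)] by simp
    next
      case False then show ?thesis using a rst_out by simp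
    qed
  qed
  have "bij_betw (rst C f) P P" using bij_betw_byWitness[OF l r i1 i2] .
  then show ?thesis using ext unfolding BG_carrier Bij_def by blast
qed

lemma rst_mult:
  assumes C: "C \<in> CC" and a: "a \<in> KK" and b: "b \<in> KK"
  shows "rst C (a \<otimes>\<^bsub>SP\<^esub> b) = rst C a \<otimes>\<^bsub>SP\<^esub> rst C b"
proof (rule BG_eqI)
  have ab: "a \<otimes>\<^bsub>SP\<^esub> b \<in> KK" using subgroup.m_closed[OF K_subgroup a b] .
  show "rst C (a \<otimes>\<^bsub>SP\<^esub> b) \<in> carrier SP" using rst_carrier[OF C ab] .
  show "rst C a \<otimes>\<^bsub>SP\<^esub> rst C b \<in> carrier SP" using rst_carrier[OF C a] rst_carrier[OF C b] by simp
  fix x assume x: "x \<in> P"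
  have eq: "(rst C a \<otimes>\<^bsub>SP\<^esub> rst C b) x = rst C a (rst C b x)"
    using BG_mult_apply[OF rst_carrier[OF C a] rst_carrier[OF C b] x] .
  show "rst C (a \<otimes>\<^bsub>SP\<^esub> b) x = (rst C a \<otimes>\<^bsub>SP\<^esub> rst C b) x"
  proof (cases "x \<in> C")
    case True
    have "b x \<in> C" using K_pres[OF b C True] .
    then show ?thesis using eq True rst_in BG_mult_apply[OF K_mem_SP[OF a] K_mem_SP[OF b] x] by simp
  next
    case False then show ?thesis using eq x rst_out by simp
  qed
qed

lemma rst_one:
  assumes C: "C \<in> CC" shows "rst C \<one>\<^bsub>SP\<^esub> = \<one>\<^bsub>SP\<^esub>"
proof (rule BG_eqI)
  show "rst C \<one>\<^bsub>SP\<^esub> \<in> carrier SP" using rst_carrier[OF C subgroup.one_closed[OF K_subgroup]] .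
  show "\<one>\<^bsub>SP\<^esub> \<in> carrier SP" by simp
  fix x assume x: "x \<in> P"
  show "rst C \<one>\<^bsub>SP\<^esub> x = \<one>\<^bsub>SP\<^esub> x"
    using x BG_one_apply[OF x] rst_in rst_out by (cases "x \<in> C") simp_all
qed

lemma rst_inv:
  assumes C: "C \<in> CC" and a: "a \<in> KK"
  shows "rst C (inv\<^bsub>SP\<^esub> a) = inv\<^bsub>SP\<^esub> (rst C a)"
proof -
  have ia: "inv\<^bsub>SP\<^esub> a \<in> KK" using subgroup.m_inv_closed[OF K_subgroup a] .
  have "rst C (inv\<^bsub>SP\<^esub> a) \<otimes>\<^bsub>SP\<^esub> rst C a = rst C (inv\<^bsub>SP\<^esub> a \<otimes>\<^bsub>SP\<^esub> a)"
    using rst_mult[OF C ia a] by simp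
  also have "\<dots> = \<one>\<^bsub>SP\<^esub>" using rst_one[OF C] K_mem_SP[OF a] by simp
  finally show ?thesis
    using BG.inv_equality[OF _ rst_carrier[OF C a] rst_carrier[OF C ia]] by simp
qed

lemma rst_conj:
  assumes C: "C \<in> CC" and k: "k \<in> KK" and a: "a \<in> KK"
  shows "k \<otimes>\<^bsub>SP\<^esub> rst C a \<otimes>\<^bsub>SP\<^esub> inv\<^bsub>SP\<^esub> k = rst C (k \<otimes>\<^bsub>SP\<^esub> a \<otimes>\<^bsub>SP\<^esub> inv\<^bsub>SP\<^esub> k)"
proof (rule BG_eqI)
  have kc: "k \<in> carrier SP" using K_mem_SP[OF k] .
  have ac: "a \<in> carrier SP" using K_mem_SP[OF a] .
  have ik: "inv\<^bsub>SP\<^esub> k \<in> KK" using subgroup.m_inv_closed[OF K_subgroup k] .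
  have ikc: "inv\<^bsub>SP\<^esub> k \<in> carrier SP" using K_mem_SP[OF ik] .
  have rc: "rst C a \<in> carrier SP" using rst_carrier[OF C a] .
  have kak: "k \<otimes>\<^bsub>SP\<^esub> a \<otimes>\<^bsub>SP\<^esub> inv\<^bsub>SP\<^esub> k \<in> KK" using K_invsub_K k a unfolding invsub_def by blast
  show "k \<otimes>\<^bsub>SP\<^esub> rst C a \<otimes>\<^bsub>SP\<^esub> inv\<^bsub>SP\<^esub> k \<in> carrier SP" using kc rc ikc by simp
  show "rst C (k \<otimes>\<^bsub>SP\<^esub> a \<otimes>\<^bsub>SP\<^esub> inv\<^bsub>SP\<^esub> k) \<in> carrier SP" using rst_carrier[OF C kak] .
  fix x assume x: "x \<in> P"
  define y where "y = (inv\<^bsub>SP\<^esub> k) x"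
  have yP: "y \<in> P" unfolding y_def using BG_closed[OF ikc x] .
  have kyx: "k y = x" unfolding y_def using BG_inv_apply2[OF kc x] .
  have L: "(k \<otimes>\<^bsub>SP\<^esub> rst C a \<otimes>\<^bsub>SP\<^esub> inv\<^bsub>SP\<^esub> k) x = k (rst C a y)"
    using BG_mult_apply[OF BG.m_closed[OF kc rc] ikc x] BG_mult_apply[OF kc rc yP] y_def by simp
  have R: "(k \<otimes>\<^bsub>SP\<^esub> a \<otimes>\<^bsub>SP\<^esub> inv\<^bsub>SP\<^esub> k) x = k (a y)"
    using BG_mult_apply[OF BG.m_closed[OF kc ac] ikc x] BG_mult_apply[OF kc ac yP] y_def by simp
  show "(k \<otimes>\<^bsub>SP\<^esub> rst C a \<otimes>\<^bsub>SP\<^esub> inv\<^bsub>SP\<^esub> k) x = rst C (k \<otimes>\<^bsub>SP\<^esub> a \<otimes>\<^bsub>SP\<^esub> inv\<^bsub>SP\<^esub> k) x"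
  proof (cases "x \<in> C")
    case True
    have "y \<in> C" using K_pres_inv[OF k C yP] kyx True by simp
    then show ?thesis using L R True rst_in by simp
  next
    case False
    have "y \<notin> C" using K_pres[OF k C] kyx False by metis
    then show ?thesis using L R False rst_out x yP kyx by simp
  qed
qed

end


context setting begin

lemma W_sub_Soc:
  assumes Sab: "\<And>a b. a \<in> Soc \<Longrightarrow> b \<in> Soc \<Longrightarrow> a \<otimes>\<^bsub>SP\<^esub> b = b \<otimes>\<^bsub>SP\<^esub> a"
    and W: "invsub SP KK W" and WK: "W \<subseteq> KK"
    and agr: "\<And>w C. w \<in> W \<Longrightarrow> C \<in> CC \<Longrightarrow> \<exists>s\<in>Soc. \<forall>x\<in>C. w x = s x"
  shows "W \<subseteq> Soc"
proof -
  define Xs where "Xs = {f \<in> carrier SP. \<forall>C\<in>CC. \<exists>s\<in>Soc. \<forall>x\<in>C. f x = s x}"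
  have SinvK: "invsub SP KK Soc" using invsub_G_K[OF Soc_invsub] .
  have Ss: "subgroup Soc SP" using Soc_invsub unfolding invsub_def by blast
  have SK: "Soc \<subseteq> KK" by (rule Soc_sub_K)
  have KKc: "KK \<subseteq> carrier SP" using K_mem_SP by blast
  have XsI: "f \<in> Xs" if "f \<in> carrier SP" "\<And>C. C \<in> CC \<Longrightarrow> \<exists>s\<in>Soc. \<forall>x\<in>C. f x = s x" for f
    unfolding Xs_def using that by blast
  have XsD: "\<exists>s\<in>Soc. \<forall>x\<in>C. f x = s x" if "f \<in> Xs" "C \<in> CC" for f C
    using that unfolding Xs_def by blast
  have Xsc: "Xs \<subseteq> carrier SP" unfolding Xs_def by blast
  have Xs_pres: "f x \<in> C" if f: "f \<in> Xs" and C: "C \<in> CC" and x: "x \<in> C" for f C x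
  proof -
    obtain s where s: "s \<in> Soc" "\<forall>x\<in>C. f x = s x" using XsD[OF f C] by blast
    have "s \<in> KK" using s(1) SK by blast
    then show ?thesis using K_pres[OF _ C x] s x by simp
  qed
  have Xs_sub: "subgroup Xs SP"
  proof (rule BG.subgroupI)
    show "Xs \<subseteq> carrier SP" by (rule Xsc)
    have "\<one>\<^bsub>SP\<^esub> \<in> Xs"
    proof (rule XsI)
      show "\<one>\<^bsub>SP\<^esub> \<in> carrier SP" by simp
      fix C assume "C \<in> CC"
      show "\<exists>s\<in>Soc. \<forall>x\<in>C. \<one>\<^bsub>SP\<^esub> x = s x" using subgroup.one_closed[OF Ss] by blast
    qed
    then show "Xs \<noteq> {}" by blast
  next
    fix f assume f: "f \<in> Xs"
    have fc: "f \<in> carrier SP" using f Xsc by blast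
    show "inv\<^bsub>SP\<^esub> f \<in> Xs"
    proof (rule XsI)
      show "inv\<^bsub>SP\<^esub> f \<in> carrier SP" using fc by simp
      fix C assume C: "C \<in> CC"
      obtain s where s: "s \<in> Soc" "\<forall>x\<in>C. f x = s x" using XsD[OF f C] by blast
      have sK: "s \<in> KK" using s(1) SK by blast
      have isS: "inv\<^bsub>SP\<^esub> s \<in> Soc" using subgroup.m_inv_closed[OF Ss s(1)] .
      have isK: "inv\<^bsub>SP\<^esub> s \<in> KK" using subgroup.m_inv_closed[OF K_subgroup sK] .
      have "(inv\<^bsub>SP\<^esub> f) x = (inv\<^bsub>SP\<^esub> s) x" if x: "x \<in> C" for x
      proof -
        define y where "y = (inv\<^bsub>SP\<^esub> s) x"
        have yC: "y \<in> C" unfolding y_def using K_pres[OF isK C x] .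
        have yP: "y \<in> P" using CC_sub[OF C] yC by blast
        have xP: "x \<in> P" using CC_sub[OF C] x by blast
        have "f y = x" using s(2) yC BG_inv_apply2[OF K_mem_SP[OF sK] xP] y_def by simp
        then have "(inv\<^bsub>SP\<^esub> f) x = (inv\<^bsub>SP\<^esub> f) (f y)" by simp
        also have "\<dots> = y" using BG_inv_apply1[OF fc yP] .
        finally show ?thesis unfolding y_def .
      qed
      then show "\<exists>s\<in>Soc. \<forall>x\<in>C. (inv\<^bsub>SP\<^esub> f) x = s x" using isS by blast
    qed
  next
    fix f g assume f: "f \<in> Xs" and g: "g \<in> Xs"
    have fc: "f \<in> carrier SP" and gc: "g \<in> carrier SP" using f g Xsc by blast+
    show "f \<otimes>\<^bsub>SP\<^esub> g \<in> Xs"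
    proof (rule XsI)
      show "f \<otimes>\<^bsub>SP\<^esub> g \<in> carrier SP" using fc gc by simp
      fix C assume C: "C \<in> CC"
      obtain s where s: "s \<in> Soc" "\<forall>x\<in>C. f x = s x" using XsD[OF f C] by blast
      obtain t where t: "t \<in> Soc" "\<forall>x\<in>C. g x = t x" using XsD[OF g C] by blast
      have sK: "s \<in> KK" and tK: "t \<in> KK" using s(1) t(1) SK by blast+
      have "(f \<otimes>\<^bsub>SP\<^esub> g) x = (s \<otimes>\<^bsub>SP\<^esub> t) x" if x: "x \<in> C" for x
      proof -
        have xP: "x \<in> P" using CC_sub[OF C] x by blast
        have "t x \<in> C" using K_pres[OF tK C x] .
        then show ?thesis using BG_mult_apply[OF fc gc xP] BG_mult_apply[OF K_mem_SP[OF sK] K_mem_SP[OF tK] xP]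
          s(2) t(2) x by simp
      qed
      moreover have "s \<otimes>\<^bsub>SP\<^esub> t \<in> Soc" using subgroup.m_closed[OF Ss s(1) t(1)] .
      ultimately show "\<exists>s\<in>Soc. \<forall>x\<in>C. (f \<otimes>\<^bsub>SP\<^esub> g) x = s x" by blast
    qed
  qed
  have Xs_comm: "f \<otimes>\<^bsub>SP\<^esub> g = g \<otimes>\<^bsub>SP\<^esub> f" if f: "f \<in> Xs" and g: "g \<in> Xs" for f g
  proof -
    have fc: "f \<in> carrier SP" and gc: "g \<in> carrier SP" using f g Xsc by blast+
    show ?thesis
    proof (rule BG_eqI)
      show "f \<otimes>\<^bsub>SP\<^esub> g \<in> carrier SP" "g \<otimes>\<^bsub>SP\<^esub> f \<in> carrier SP" using fc gc by simp_all
      fix x assume xP: "x \<in> P"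
      obtain C where C: "C \<in> CC" "x \<in> C" using CC_cover[OF xP] by blast
      obtain s where s: "s \<in> Soc" "\<forall>x\<in>C. f x = s x" using XsD[OF f C(1)] by blast
      obtain t where t: "t \<in> Soc" "\<forall>x\<in>C. g x = t x" using XsD[OF g C(1)] by blast
      have sK: "s \<in> KK" and tK: "t \<in> KK" using s(1) t(1) SK by blast+
      have sc: "s \<in> carrier SP" and tc: "t \<in> carrier SP" using K_mem_SP sK tK by blast+
      have "(f \<otimes>\<^bsub>SP\<^esub> g) x = s (t x)"
        using BG_mult_apply[OF fc gc xP] s(2) t(2) C(2) K_pres[OF tK C(1) C(2)] by simp
      also have "\<dots> = (s \<otimes>\<^bsub>SP\<^esub> t) x" using BG_mult_apply[OF sc tc xP] by simp
      also have "\<dots> = (t \<otimes>\<^bsub>SP\<^esub> s) x" using Sab[OF s(1) t(1)] by simp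
      also have "\<dots> = t (s x)" using BG_mult_apply[OF tc sc xP] by simp
      also have "\<dots> = (g \<otimes>\<^bsub>SP\<^esub> f) x"
        using BG_mult_apply[OF gc fc xP] s(2) t(2) C(2) K_pres[OF sK C(1) C(2)] by simp
      finally show "(f \<otimes>\<^bsub>SP\<^esub> g) x = (g \<otimes>\<^bsub>SP\<^esub> f) x" .
    qed
  qed
  have Xs_inv: "invsub SP KK Xs"
    unfolding invsub_def
  proof (intro conjI ballI)
    show "subgroup Xs SP" by (rule Xs_sub)
    fix k f assume k: "k \<in> KK" and f: "f \<in> Xs"
    have fc: "f \<in> carrier SP" using f Xsc by blast
    have kc: "k \<in> carrier SP" using K_mem_SP[OF k] .
    have ik: "inv\<^bsub>SP\<^esub> k \<in> KK" using subgroup.m_inv_closed[OF K_subgroup k] .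
    have ikc: "inv\<^bsub>SP\<^esub> k \<in> carrier SP" using K_mem_SP[OF ik] .
    show "k \<otimes>\<^bsub>SP\<^esub> f \<otimes>\<^bsub>SP\<^esub> inv\<^bsub>SP\<^esub> k \<in> Xs"
    proof (rule XsI)
      show "k \<otimes>\<^bsub>SP\<^esub> f \<otimes>\<^bsub>SP\<^esub> inv\<^bsub>SP\<^esub> k \<in> carrier SP" using kc fc ikc by simp
      fix C assume C: "C \<in> CC"
      obtain s where s: "s \<in> Soc" "\<forall>x\<in>C. f x = s x" using XsD[OF f C] by blast
      have sK: "s \<in> KK" using s(1) SK by blast
      have sc: "s \<in> carrier SP" using K_mem_SP[OF sK] .
      have "(k \<otimes>\<^bsub>SP\<^esub> f \<otimes>\<^bsub>SP\<^esub> inv\<^bsub>SP\<^esub> k) x = (k \<otimes>\<^bsub>SP\<^esub> s \<otimes>\<^bsub>SP\<^esub> inv\<^bsub>SP\<^esub> k) x" if x: "x \<in> C" for x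
      proof -
        have xP: "x \<in> P" using CC_sub[OF C] x by blast
        define y where "y = (inv\<^bsub>SP\<^esub> k) x"
        have yC: "y \<in> C" unfolding y_def using K_pres[OF ik C x] .
        have yP: "y \<in> P" using CC_sub[OF C] yC by blast
        have "(k \<otimes>\<^bsub>SP\<^esub> f \<otimes>\<^bsub>SP\<^esub> inv\<^bsub>SP\<^esub> k) x = k (f y)"
          using BG_mult_apply[OF BG.m_closed[OF kc fc] ikc xP] BG_mult_apply[OF kc fc yP] y_def by simp
        also have "\<dots> = k (s y)" using s(2) yC by simp
        also have "\<dots> = (k \<otimes>\<^bsub>SP\<^esub> s \<otimes>\<^bsub>SP\<^esub> inv\<^bsub>SP\<^esub> k) x"
          using BG_mult_apply[OF BG.m_closed[OF kc sc] ikc xP] BG_mult_apply[OF kc sc yP] y_def by simp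
        finally show ?thesis .
      qed
      moreover have "k \<otimes>\<^bsub>SP\<^esub> s \<otimes>\<^bsub>SP\<^esub> inv\<^bsub>SP\<^esub> k \<in> Soc" using SinvK k s(1) unfolding invsub_def by blast
      ultimately show "\<exists>s\<in>Soc. \<forall>x\<in>C. (k \<otimes>\<^bsub>SP\<^esub> f \<otimes>\<^bsub>SP\<^esub> inv\<^bsub>SP\<^esub> k) x = s x" by blast
    qed
  qed
  have WXs: "W \<subseteq> Xs"
  proof
    fix w assume w: "w \<in> W"
    show "w \<in> Xs"
    proof (rule XsI)
      show "w \<in> carrier SP" using K_mem_SP w WK by blast
      fix C assume "C \<in> CC" then show "\<exists>s\<in>Soc. \<forall>x\<in>C. w x = s x" using agr w by blast
    qed
  qed
  define Sig where "Sig = generate SP (\<Union>{T. mininv SP KK Xs T})"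
  have Sig_sub: "subgroup Sig SP" unfolding Sig_def
  proof (rule BG.generate_is_subgroup)
    show "\<Union>{T. mininv SP KK Xs T} \<subseteq> carrier SP" using Xsc unfolding mininv_def by blast
  qed
  have claimM: "rst C h \<in> Sig" if T: "mininv SP KK KK T" and h: "h \<in> T" and C: "C \<in> CC" for T h C
  proof -
    have Tinv: "invsub SP KK T" using T unfolding mininv_def by blast
    have Ts: "subgroup T SP" using Tinv unfolding invsub_def by blast
    have TK: "T \<subseteq> KK" using T unfolding mininv_def by blast
    have TS: "T \<subseteq> Soc" using mininv_sub_Soc[OF T] .
    define TC where "TC = rst C ` T"
    have TCc: "TC \<subseteq> carrier SP" unfolding TC_def using rst_carrier[OF C] TK by blast
    have TCs: "subgroup TC SP"
    proof (rule BG.subgroupI)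
      show "TC \<subseteq> carrier SP" by (rule TCc)
      show "TC \<noteq> {}" unfolding TC_def using subgroup.one_closed[OF Ts] by blast
    next
      fix u assume "u \<in> TC"
      then obtain a where a: "a \<in> T" "u = rst C a" unfolding TC_def by blast
      have aK: "a \<in> KK" using a(1) TK by blast
      have "inv\<^bsub>SP\<^esub> u = rst C (inv\<^bsub>SP\<^esub> a)" using rst_inv[OF C aK] a(2) by simp
      moreover have "inv\<^bsub>SP\<^esub> a \<in> T" using subgroup.m_inv_closed[OF Ts a(1)] .
      ultimately show "inv\<^bsub>SP\<^esub> u \<in> TC" unfolding TC_def by blast
    next
      fix u v assume "u \<in> TC" "v \<in> TC"
      then obtain a b where ab: "a \<in> T" "u = rst C a" "b \<in> T" "v = rst C b" unfolding TC_def by blast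
      have aK: "a \<in> KK" and bK: "b \<in> KK" using ab TK by blast+
      have "u \<otimes>\<^bsub>SP\<^esub> v = rst C (a \<otimes>\<^bsub>SP\<^esub> b)" using rst_mult[OF C aK bK] ab by simp
      moreover have "a \<otimes>\<^bsub>SP\<^esub> b \<in> T" using subgroup.m_closed[OF Ts ab(1) ab(3)] .
      ultimately show "u \<otimes>\<^bsub>SP\<^esub> v \<in> TC" unfolding TC_def by blast
    qed
    have TCinv: "invsub SP KK TC"
      unfolding invsub_def
    proof (intro conjI ballI)
      show "subgroup TC SP" by (rule TCs)
      fix k u assume k: "k \<in> KK" and "u \<in> TC"
      then obtain a where a: "a \<in> T" "u = rst C a" unfolding TC_def by blast
      have aK: "a \<in> KK" using a(1) TK by blast
      have "k \<otimes>\<^bsub>SP\<^esub> u \<otimes>\<^bsub>SP\<^esub> inv\<^bsub>SP\<^esub> k = rst C (k \<otimes>\<^bsub>SP\<^esub> a \<otimes>\<^bsub>SP\<^esub> inv\<^bsub>SP\<^esub> k)"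
        using rst_conj[OF C k aK] a(2) by simp
      moreover have "k \<otimes>\<^bsub>SP\<^esub> a \<otimes>\<^bsub>SP\<^esub> inv\<^bsub>SP\<^esub> k \<in> T" using Tinv k a(1) unfolding invsub_def by blast
      ultimately show "k \<otimes>\<^bsub>SP\<^esub> u \<otimes>\<^bsub>SP\<^esub> inv\<^bsub>SP\<^esub> k \<in> TC" unfolding TC_def by blast
    qed
    have TCXs: "TC \<subseteq> Xs"
    proof
      fix u assume "u \<in> TC"
      then obtain a where a: "a \<in> T" "u = rst C a" unfolding TC_def by blast
      have aK: "a \<in> KK" using a(1) TK by blast
      show "u \<in> Xs"
      proof (rule XsI)
        show "u \<in> carrier SP" using rst_carrier[OF C aK] a(2) by simp
        fix D assume D: "D \<in> CC"
        show "\<exists>s\<in>Soc. \<forall>x\<in>D. u x = s x"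
        proof (cases "D = C")
          case True
          have "\<forall>x\<in>D. u x = a x" using a(2) rst_in True by simp
          moreover have "a \<in> Soc" using a(1) TS by blast
          ultimately show ?thesis by blast
        next
          case False
          have "u x = \<one>\<^bsub>SP\<^esub> x" if x: "x \<in> D" for x
          proof -
            have xP: "x \<in> P" using CC_sub[OF D] x by blast
            have "x \<notin> C" using CC_disj[OF D C x] False by blast
            then show ?thesis using a(2) rst_out[OF xP] BG_one_apply[OF xP] by simp
          qed
          then show ?thesis using subgroup.one_closed[OF Ss] by blast
        qed
      qed
    qed
    show ?thesis
    proof (cases "TC = {\<one>\<^bsub>SP\<^esub>}")
      case True
      have "rst C h = \<one>\<^bsub>SP\<^esub>" using True h unfolding TC_def by blast
      then show ?thesis unfolding Sig_def using generate.one by simp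
    next
      case False
      have "mininv SP KK Xs TC"
        unfolding mininv_def
      proof (intro conjI allI impI)
        show "invsub SP KK TC" by (rule TCinv)
        show "TC \<subseteq> Xs" by (rule TCXs)
        show "TC \<noteq> {\<one>\<^bsub>SP\<^esub>}" by (rule False)
        fix T' assume T': "invsub SP KK T'" "T' \<noteq> {\<one>\<^bsub>SP\<^esub>}" "T' \<subseteq> TC"
        have T's: "subgroup T' SP" using T'(1) unfolding invsub_def by blast
        define T'' where "T'' = {a \<in> T. rst C a \<in> T'}"
        have T''s: "subgroup T'' SP"
        proof (rule BG.subgroupI)
          show "T'' \<subseteq> carrier SP" unfolding T''_def using sub_mem[OF Ts] by blast
          have "rst C \<one>\<^bsub>SP\<^esub> \<in> T'" using rst_one[OF C] subgroup.one_closed[OF T's] by simp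
          then have "\<one>\<^bsub>SP\<^esub> \<in> T''" unfolding T''_def using subgroup.one_closed[OF Ts] by blast
          then show "T'' \<noteq> {}" by blast
        next
          fix a assume a: "a \<in> T''"
          have aT: "a \<in> T" and aT': "rst C a \<in> T'" using a unfolding T''_def by blast+
          have aK: "a \<in> KK" using aT TK by blast
          have "rst C (inv\<^bsub>SP\<^esub> a) \<in> T'" using rst_inv[OF C aK] subgroup.m_inv_closed[OF T's aT'] by simp
          then show "inv\<^bsub>SP\<^esub> a \<in> T''" unfolding T''_def using subgroup.m_inv_closed[OF Ts aT] by blast
        next
          fix a b assume a: "a \<in> T''" and b: "b \<in> T''"
          have aT: "a \<in> T" and aT': "rst C a \<in> T'" using a unfolding T''_def by blast+
          have bT: "b \<in> T" and bT': "rst C b \<in> T'" using b unfolding T''_def by blast+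
          have aK: "a \<in> KK" and bK: "b \<in> KK" using aT bT TK by blast+
          have "rst C (a \<otimes>\<^bsub>SP\<^esub> b) \<in> T'" using rst_mult[OF C aK bK] subgroup.m_closed[OF T's aT' bT'] by simp
          then show "a \<otimes>\<^bsub>SP\<^esub> b \<in> T''" unfolding T''_def using subgroup.m_closed[OF Ts aT bT] by blast
        qed
        have T''inv: "invsub SP KK T''"
          unfolding invsub_def
        proof (intro conjI ballI)
          show "subgroup T'' SP" by (rule T''s)
          fix k a assume k: "k \<in> KK" and a: "a \<in> T''"
          have aT: "a \<in> T" and aT': "rst C a \<in> T'" using a unfolding T''_def by blast+
          have aK: "a \<in> KK" using aT TK by blast
          have "rst C (k \<otimes>\<^bsub>SP\<^esub> a \<otimes>\<^bsub>SP\<^esub> inv\<^bsub>SP\<^esub> k) \<in> T'"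
            using rst_conj[OF C k aK] T'(1) k aT' unfolding invsub_def by metis
          moreover have "k \<otimes>\<^bsub>SP\<^esub> a \<otimes>\<^bsub>SP\<^esub> inv\<^bsub>SP\<^esub> k \<in> T" using Tinv k aT unfolding invsub_def by blast
          ultimately show "k \<otimes>\<^bsub>SP\<^esub> a \<otimes>\<^bsub>SP\<^esub> inv\<^bsub>SP\<^esub> k \<in> T''" unfolding T''_def by blast
        qed
        have "\<one>\<^bsub>SP\<^esub> \<in> T'" using subgroup.one_closed[OF T's] .
        then obtain t where t: "t \<in> T'" "t \<noteq> \<one>\<^bsub>SP\<^esub>" using T'(2) by blast
        then obtain a where a: "a \<in> T" "t = rst C a" using T'(3) unfolding TC_def by blast
        have "a \<noteq> \<one>\<^bsub>SP\<^esub>" using a t rst_one[OF C] by blast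
        moreover have "a \<in> T''" unfolding T''_def using a t by blast
        ultimately have "T'' \<noteq> {\<one>\<^bsub>SP\<^esub>}" by blast
        moreover have "T'' \<subseteq> T" unfolding T''_def by blast
        ultimately have "T'' = T" using T T''inv unfolding mininv_def by blast
        then have "TC \<subseteq> T'" unfolding TC_def T''_def by blast
        then show "T' = TC" using T'(3) by blast
      qed
      moreover have "rst C h \<in> TC" unfolding TC_def using h by blast
      ultimately show ?thesis unfolding Sig_def by (blast intro: generate.incl)
    qed
  qed
  have claimS: "rst C s \<in> Sig" if s: "s \<in> Soc" and C: "C \<in> CC" for s C
  proof -
    have gsub: "\<And>h. h \<in> generate SP (\<Union>{M. mininv SP KK KK M}) \<Longrightarrow> h \<in> KK"
      using SK unfolding Soc_def by blast
    from s[unfolded Soc_def] show ?thesis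
    proof (induct s rule: generate.induct)
      case one
      then show ?case using rst_one[OF C] generate.one unfolding Sig_def by simp
    next
      case (incl h)
      then obtain T where "mininv SP KK KK T" "h \<in> T" by blast
      then show ?case using claimM C by blast
    next
      case (inv h)
      then obtain T where T: "mininv SP KK KK T" "h \<in> T" by blast
      have "subgroup T SP" using T(1) unfolding mininv_def invsub_def by blast
      then have "inv\<^bsub>SP\<^esub> h \<in> T" using T(2) by (rule subgroup.m_inv_closed)
      then show ?case using claimM[OF T(1) _ C] by blast
    next
      case (eng h1 h2)
      have h1K: "h1 \<in> KK" and h2K: "h2 \<in> KK" using gsub eng(1,3) by blast+
      have "rst C (h1 \<otimes>\<^bsub>SP\<^esub> h2) = rst C h1 \<otimes>\<^bsub>SP\<^esub> rst C h2" using rst_mult[OF C h1K h2K] .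
      then show ?case using subgroup.m_closed[OF Sig_sub eng(2) eng(4)] by simp
    qed
  qed
  have XsSig: "Xs \<subseteq> Sig"
  proof
    fix f assume f: "f \<in> Xs"
    have fc: "f \<in> carrier SP" using f Xsc by blast
    define gg where "gg F = (\<lambda>x. if x \<in> \<Union>F then f x else if x \<in> P then x else undefined)" for F
    have finCC: "finite CC"
    proof (rule finite_subset)
      show "CC \<subseteq> Pow P" using CC_sub by blast
      show "finite (Pow P)" using finP by simp
    qed
    have step: "F \<subseteq> CC \<longrightarrow> gg F \<in> Sig" if finF: "finite F" for F
      using finF
    proof (induction F rule: finite_induct)
      case empty
      have "gg {} = \<one>\<^bsub>SP\<^esub>" unfolding gg_def by (auto simp: BijGroup_def restrict_def)
      then show ?case using generate.one unfolding Sig_def by simp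
    next
      case (insert C F)
      show ?case
      proof
        assume sub: "insert C F \<subseteq> CC"
        have C: "C \<in> CC" and FC: "F \<subseteq> CC" using sub by blast+
        have gF: "gg F \<in> Sig" using insert.IH FC by blast
        have gFc: "gg F \<in> carrier SP" using gF Sig_sub subgroup.subset by blast
        obtain s where s: "s \<in> Soc" "\<forall>x\<in>C. f x = s x" using XsD[OF f C] by blast
        have sK: "s \<in> KK" using s(1) SK by blast
        have rc: "rst C s \<in> carrier SP" using rst_carrier[OF C sK] .
        have eq: "gg (insert C F) = rst C s \<otimes>\<^bsub>SP\<^esub> gg F"
        proof
          fix x
          show "gg (insert C F) x = (rst C s \<otimes>\<^bsub>SP\<^esub> gg F) x"
          proof (cases "x \<in> P")
            case False
            have "x \<notin> \<Union>(insert C F)" using False sub CC_sub by blast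
            then have "gg (insert C F) x = undefined" unfolding gg_def using False by simp
            then show ?thesis using BG_mult_outside[OF rc gFc False] by simp
          next
            case xP: True
            have R: "(rst C s \<otimes>\<^bsub>SP\<^esub> gg F) x = rst C s (gg F x)" using BG_mult_apply[OF rc gFc xP] .
            show ?thesis
            proof (cases "x \<in> C")
              case True
              have "x \<notin> \<Union>F"
              proof
                assume "x \<in> \<Union>F"
                then obtain D where D: "D \<in> F" "x \<in> D" by blast
                then have "D = C" using CC_disj[OF _ C _ True] FC by blast
                then show False using D(1) insert.hyps(2) by simp
              qed
              then have "gg F x = x" unfolding gg_def using xP by simp
              then have "(rst C s \<otimes>\<^bsub>SP\<^esub> gg F) x = f x" using R rst_in[OF True] s(2) True by simp
              moreover have "gg (insert C F) x = f x" unfolding gg_def using True by simp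
              ultimately show ?thesis by simp
            next
              case False
              show ?thesis
              proof (cases "x \<in> \<Union>F")
                case True
                then obtain D where D: "D \<in> F" "x \<in> D" by blast
                have DC: "D \<in> CC" using D(1) FC by blast
                have fxD: "f x \<in> D" using Xs_pres[OF f DC D(2)] .
                have "D \<noteq> C" using D(1) insert.hyps(2) by blast
                then have "f x \<notin> C" using CC_disj[OF DC C fxD] by blast
                moreover have fxP: "f x \<in> P" using BG_closed[OF fc xP] .
                moreover have "gg F x = f x" unfolding gg_def using True by simp
                ultimately have "(rst C s \<otimes>\<^bsub>SP\<^esub> gg F) x = f x" using R rst_out by simp
                moreover have "gg (insert C F) x = f x" unfolding gg_def using True by simp
                ultimately show ?thesis by simp
              next
                case nF: False
                have "gg F x = x" unfolding gg_def using nF xP by simp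
                then have "(rst C s \<otimes>\<^bsub>SP\<^esub> gg F) x = x" using R rst_out[OF xP False] by simp
                moreover have "gg (insert C F) x = x" unfolding gg_def using nF False xP by simp
                ultimately show ?thesis by simp
              qed
            qed
          qed
        qed
        have "rst C s \<in> Sig" using claimS[OF s(1) C] .
        then show "gg (insert C F) \<in> Sig" using eq subgroup.m_closed[OF Sig_sub _ gF] by simp
      qed
    qed
    have "gg CC \<in> Sig" using step[OF finCC] by blast
    moreover have "gg CC = f"
    proof
      fix x
      show "gg CC x = f x"
      proof (cases "x \<in> P")
        case True
        then have "x \<in> \<Union>CC" using CC_cover by blast
        then show ?thesis unfolding gg_def by simp
      next
        case False
        then have "x \<notin> \<Union>CC" using CC_sub by blast
        then show ?thesis unfolding gg_def using False BG_outside[OF fc False] by simp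
      qed
    qed
    ultimately show "f \<in> Sig" by simp
  qed
  have "W \<subseteq> generate SP (\<Union>{T. mininv SP KK W T})"
    using BG.complement_argument[OF finSP KKc Xs_inv Xs_comm _ W WXs] XsSig unfolding Sig_def by blast
  also have "\<dots> \<subseteq> Soc" unfolding Soc_def
  proof (rule BG.mono_generate)
    show "\<Union>{T. mininv SP KK W T} \<subseteq> \<Union>{M. mininv SP KK KK M}"
      using WK unfolding mininv_def by blast
  qed
  finally show ?thesis .
qed

end


context setting begin

lemma orb_stable:
  assumes N: "subgroup N SP" and n: "n \<in> N" and w: "w \<in> P"
  shows "n ` orb N w = orb N w"
proof
  have nc: "n \<in> carrier SP" using sub_mem[OF N n] .
  show "n ` orb N w \<subseteq> orb N w"
  proof
    fix z assume "z \<in> n ` orb N w"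
    then obtain h where h: "h \<in> N" "z = n (h w)" unfolding orb_def by blast
    have "(n \<otimes>\<^bsub>SP\<^esub> h) w = z" using BG_mult_apply[OF nc sub_mem[OF N h(1)] w] h by simp
    moreover have "n \<otimes>\<^bsub>SP\<^esub> h \<in> N" using subgroup.m_closed[OF N n h(1)] .
    ultimately show "z \<in> orb N w" unfolding orb_def by (metis image_eqI)
  qed
  show "orb N w \<subseteq> n ` orb N w"
  proof
    fix z assume "z \<in> orb N w"
    then obtain h where h: "h \<in> N" "z = h w" unfolding orb_def by blast
    have inh: "inv\<^bsub>SP\<^esub> n \<otimes>\<^bsub>SP\<^esub> h \<in> N" using subgroup.m_closed[OF N subgroup.m_inv_closed[OF N n] h(1)] .
    have hc: "h \<in> carrier SP" using sub_mem[OF N h(1)] .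
    have hw: "h w \<in> P" using BG_closed[OF hc w] .
    have "(inv\<^bsub>SP\<^esub> n \<otimes>\<^bsub>SP\<^esub> h) w = (inv\<^bsub>SP\<^esub> n) (h w)"
      using BG_mult_apply[OF BG.inv_closed[OF nc] hc w] .
    then have "n ((inv\<^bsub>SP\<^esub> n \<otimes>\<^bsub>SP\<^esub> h) w) = z" using BG_inv_apply2[OF nc hw] h by simp
    moreover have "(inv\<^bsub>SP\<^esub> n \<otimes>\<^bsub>SP\<^esub> h) w \<in> orb N w" unfolding orb_def using inh by blast
    ultimately show "z \<in> n ` orb N w" by blast
  qed
qed

lemma part_c:
  assumes maxC: "maximal_partition P G CC"
    and Nn: "N \<lhd> subgrp P G" and N1: "N \<noteq> {\<one>\<^bsub>SP\<^esub>}" and Nt: "\<not> transitive_on N P"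
    and NS: "N \<inter> Soc = {\<one>\<^bsub>SP\<^esub>}"
  shows "\<exists>D. normal_partition P G D \<and> (\<forall>C\<in>CC. card D = card C) \<and> (\<forall>A\<in>D. card A = card CC)
           \<and> (\<forall>C\<in>CC. \<forall>A\<in>D. card (C \<inter> A) = 1)"
proof -
  have Ninv: "invsub SP G N" and NG: "N \<subseteq> G" using BG.normal_restrict_iff[OF subG] Nn by blast+
  have Ns: "subgroup N SP" using Ninv unfolding invsub_def by blast
  have oneN: "\<one>\<^bsub>SP\<^esub> \<in> N" using subgroup.one_closed[OF Ns] .
  have NK: "N \<inter> KK = {\<one>\<^bsub>SP\<^esub>}"
  proof (rule ccontr)
    assume ne: "N \<inter> KK \<noteq> {\<one>\<^bsub>SP\<^esub>}"
    have inv: "invsub SP KK (N \<inter> KK)" using BG.invsub_Int[OF invsub_G_K[OF Ninv] K_invsub_K] .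
    obtain T where T: "mininv SP KK (N \<inter> KK) T" using BG.mininv_exists[OF finSP inv ne] by blast
    have TK: "mininv SP KK KK T" using T unfolding mininv_def by blast
    have "T \<subseteq> N \<inter> Soc" using mininv_sub_Soc[OF TK] T unfolding mininv_def by blast
    then have "T \<subseteq> {\<one>\<^bsub>SP\<^esub>}" using NS by simp
    moreover have "\<one>\<^bsub>SP\<^esub> \<in> T" using T unfolding mininv_def invsub_def by (blast intro: subgroup.one_closed)
    moreover have "T \<noteq> {\<one>\<^bsub>SP\<^esub>}" using T unfolding mininv_def by blast
    ultimately show False by blast
  qed
  have N_not_K: "\<not> N \<subseteq> KK"
  proof
    assume "N \<subseteq> KK"
    then have "N \<subseteq> {\<one>\<^bsub>SP\<^esub>}" using NK by blast
    then show False using N1 oneN by blast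
  qed
  \<comment> \<open>Step 2: N is transitive on the classes\<close>
  define H where "H = KK <#>\<^bsub>SP\<^esub> N"
  have Hs: "subgroup H SP"
  proof -
    interpret GG: group "subgrp P G" using BG.subgroup_imp_group[OF subG] .
    have Kn: "KK \<lhd> subgrp P G" using BG.normal_restrict_iff[OF subG] K_invsub K_sub_G by blast
    have NsG: "subgroup N (subgrp P G)" using BG.subgroup_incl[OF Ns subG NG] .
    interpret SI: second_isomorphism_grp KK "subgrp P G" N
      using Kn NsG by (simp add: second_isomorphism_grp_def second_isomorphism_grp_axioms_def)
    have "subgroup (KK <#>\<^bsub>subgrp P G\<^esub> N) (subgrp P G)" using SI.normal_set_mult_subgroup .
    then have "subgroup H (subgrp P G)" unfolding H_def by simp
    then show ?thesis using BG.incl_subgroup[OF subG] by blast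
  qed
  have Hinv: "invsub SP G H"
    unfolding invsub_def
  proof (intro conjI ballI)
    show "subgroup H SP" by (rule Hs)
    fix g u assume g: "g \<in> G" and "u \<in> H"
    then obtain k n where kn: "k \<in> KK" "n \<in> N" "u = k \<otimes>\<^bsub>SP\<^esub> n" unfolding H_def set_mult_def by blast
    have gc: "g \<in> carrier SP" using G_mem[OF g] .
    have "g \<otimes>\<^bsub>SP\<^esub> u \<otimes>\<^bsub>SP\<^esub> inv\<^bsub>SP\<^esub> g = (g \<otimes>\<^bsub>SP\<^esub> k \<otimes>\<^bsub>SP\<^esub> inv\<^bsub>SP\<^esub> g) \<otimes>\<^bsub>SP\<^esub> (g \<otimes>\<^bsub>SP\<^esub> n \<otimes>\<^bsub>SP\<^esub> inv\<^bsub>SP\<^esub> g)"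
      using BG.cj_mult[OF gc K_mem_SP[OF kn(1)] sub_mem[OF Ns kn(2)]] kn(3) by simp
    moreover have "g \<otimes>\<^bsub>SP\<^esub> k \<otimes>\<^bsub>SP\<^esub> inv\<^bsub>SP\<^esub> g \<in> KK" using K_invsub g kn(1) unfolding invsub_def by blast
    moreover have "g \<otimes>\<^bsub>SP\<^esub> n \<otimes>\<^bsub>SP\<^esub> inv\<^bsub>SP\<^esub> g \<in> N" using Ninv g kn(2) unfolding invsub_def by blast
    ultimately show "g \<otimes>\<^bsub>SP\<^esub> u \<otimes>\<^bsub>SP\<^esub> inv\<^bsub>SP\<^esub> g \<in> H" unfolding H_def using BG.mem_set_mult by metis
  qed
  have KH: "KK \<subseteq> H"
  proof
    fix k assume k: "k \<in> KK"
    have "k \<otimes>\<^bsub>SP\<^esub> \<one>\<^bsub>SP\<^esub> \<in> H" unfolding H_def using BG.mem_set_mult[OF k oneN] .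
    then show "k \<in> H" using K_mem_SP[OF k] by simp
  qed
  have NH: "N \<subseteq> H"
  proof
    fix n assume n: "n \<in> N"
    have "\<one>\<^bsub>SP\<^esub> \<otimes>\<^bsub>SP\<^esub> n \<in> H" unfolding H_def using BG.mem_set_mult[OF subgroup.one_closed[OF K_subgroup] n] .
    then show "n \<in> H" using sub_mem[OF Ns n] by simp
  qed
  have class_in_orbH: "C \<subseteq> orb H x" if C: "C \<in> CC" and x: "x \<in> C" for C x
  proof
    fix y assume y: "y \<in> C"
    obtain k where "k \<in> KK" "k x = y" using K_trans[OF C x y] by blast
    then show "y \<in> orb H x" unfolding orb_def using KH by blast
  qed
  have orbH_P: "orb H x = P" if x: "x \<in> P" for x
  proof -
    let ?E = "orb H ` P"
    have Einv: "invariant_partition P G ?E" using orbits_invariant[OF Hinv] .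
    have ref: "refines CC ?E"
      unfolding refines_def
    proof
      fix C assume C: "C \<in> CC"
      obtain z where z: "z \<in> C" using CC_ne[OF C] by blast
      have "z \<in> P" using CC_sub[OF C] z by blast
      then show "\<exists>B\<in>?E. C \<subseteq> B" using class_in_orbH[OF C z] by blast
    qed
    have notsing: "?E \<noteq> (\<lambda>x. {x}) ` P"
    proof
      assume eq: "?E = (\<lambda>x. {x}) ` P"
      obtain C a b where C: "C \<in> CC" "a \<in> C" "b \<in> C" "a \<noteq> b" using exists_pair by blast
      have aP: "a \<in> P" using CC_sub[OF C(1)] C(2) by blast
      have "orb H a \<in> (\<lambda>x. {x}) ` P" using eq aP by blast
      then obtain z where z: "orb H a = {z}" by blast
      have "a \<in> orb H a" "b \<in> orb H a" using orb_self[OF Hs aP] class_in_orbH[OF C(1) C(2)] C(3) by blast+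
      then show False using z C(4) by (metis singletonD)
    qed
    have "?E = {P}"
    proof (rule ccontr)
      assume "?E \<noteq> {P}"
      then have nt: "nontrivial_partition P ?E"
        unfolding nontrivial_partition_def using Einv notsing unfolding invariant_partition_def by blast
      have EC: "?E = CC" using maxC Einv nt ref unfolding maximal_partition_def by blast
      have "N \<subseteq> KK"
      proof
        fix n assume n: "n \<in> N"
        show "n \<in> KK"
        proof (rule K_char)
          show "n \<in> G" using n NG by blast
          fix C z assume C: "C \<in> CC" and z: "z \<in> C"
          have zP: "z \<in> P" using CC_sub[OF C] z by blast
          have "orb H z \<in> CC" using EC zP by blast
          then have "orb H z = C" using CC_disj[OF _ C orb_self[OF Hs zP] z] by blast
          moreover have "n z \<in> orb H z" unfolding orb_def using n NH by blast
          ultimately show "n z \<in> C" by simp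
        qed
      qed
      then show False using N_not_K by simp
    qed
    then show ?thesis using x by blast
  qed
  have Ntrans: "\<exists>n\<in>N. n x \<in> C" if x: "x \<in> P" and C: "C \<in> CC" for x C
  proof -
    obtain y where y: "y \<in> C" using CC_ne[OF C] by blast
    have "y \<in> orb H x" using orbH_P[OF x] CC_sub[OF C] y by blast
    then obtain u where u: "u \<in> H" "y = u x" unfolding orb_def by blast
    then obtain k n where kn: "k \<in> KK" "n \<in> N" "u = k \<otimes>\<^bsub>SP\<^esub> n" unfolding H_def set_mult_def by blast
    have "u x = k (n x)" using BG_mult_apply[OF K_mem_SP[OF kn(1)] sub_mem[OF Ns kn(2)] x] kn(3) by simp
    then have "k (n x) \<in> C" using u y by simp
    moreover have "n x \<in> P" using BG_closed[OF sub_mem[OF Ns kn(2)] x] .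
    ultimately have "n x \<in> C" using K_pres_inv[OF kn(1) C] by blast
    then show ?thesis using kn(2) by blast
  qed
  let ?D = "orb N ` P"
  have Dinv: "invariant_partition P G ?D" using orbits_invariant[OF Ninv] .
  define Mt where "Mt = {A. \<exists>C\<in>CC. \<exists>x\<in>C. A = C \<inter> orb N x}"
  have Mt_part: "is_partition P Mt"
    unfolding is_partition_def
  proof (intro conjI ballI impI)
    fix A assume "A \<in> Mt"
    then obtain C x where Cx: "C \<in> CC" "x \<in> C" "A = C \<inter> orb N x" unfolding Mt_def by blast
    have "x \<in> P" using CC_sub[OF Cx(1)] Cx(2) by blast
    then show "A \<noteq> {}" using Cx orb_self[OF Ns] by blast
  next
    show "\<Union>Mt = P"
    proof
      show "\<Union>Mt \<subseteq> P" unfolding Mt_def using CC_sub by blast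
      show "P \<subseteq> \<Union>Mt"
      proof
        fix x assume x: "x \<in> P"
        obtain C where C: "C \<in> CC" "x \<in> C" using CC_cover[OF x] by blast
        have "x \<in> C \<inter> orb N x" using C orb_self[OF Ns x] by blast
        moreover have "C \<inter> orb N x \<in> Mt" unfolding Mt_def using C by blast
        ultimately show "x \<in> \<Union>Mt" by blast
      qed
    qed
  next
    fix A B assume A: "A \<in> Mt" and B: "B \<in> Mt" and AB: "A \<noteq> B"
    obtain C x where Cx: "C \<in> CC" "x \<in> C" "A = C \<inter> orb N x" using A unfolding Mt_def by blast
    obtain D y where Dy: "D \<in> CC" "y \<in> D" "B = D \<inter> orb N y" using B unfolding Mt_def by blast
    show "A \<inter> B = {}"
    proof (rule ccontr)
      assume "A \<inter> B \<noteq> {}"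
      then obtain z where z: "z \<in> C" "z \<in> orb N x" "z \<in> D" "z \<in> orb N y" using Cx Dy by blast
      have xP: "x \<in> P" using CC_sub[OF Cx(1)] Cx(2) by blast
      have yP: "y \<in> P" using CC_sub[OF Dy(1)] Dy(2) by blast
      have "C = D" using CC_disj[OF Cx(1) Dy(1) z(1) z(3)] .
      moreover have "orb N x = orb N y" using orb_eq[OF Ns xP z(2)] orb_eq[OF Ns yP z(4)] by simp
      ultimately show False using AB Cx Dy by simp
    qed
  qed
  have Mt_inv: "invariant_partition P G Mt"
    unfolding invariant_partition_def
  proof (intro conjI ballI)
    show "is_partition P Mt" by (rule Mt_part)
    fix g A assume g: "g \<in> G" and "A \<in> Mt"
    then obtain C x where Cx: "C \<in> CC" "x \<in> C" "A = C \<inter> orb N x" unfolding Mt_def by blast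
    have gc: "g \<in> carrier SP" using G_mem[OF g] .
    have injg: "inj_on g P" using gc unfolding BG_carrier Bij_def bij_betw_def by blast
    have xP: "x \<in> P" using CC_sub[OF Cx(1)] Cx(2) by blast
    have "g ` A = g ` C \<inter> g ` orb N x"
      using inj_on_image_Int[OF injg CC_sub[OF Cx(1)] orb_sub[OF Ns xP]] Cx(3) by simp
    also have "\<dots> = g ` C \<inter> orb N (g x)" using orb_conj[OF Ninv g xP] by simp
    finally have "g ` A = g ` C \<inter> orb N (g x)" .
    moreover have "g ` C \<in> CC" using G_maps[OF g Cx(1)] .
    moreover have "g x \<in> g ` C" using Cx(2) by blast
    ultimately show "g ` A \<in> Mt" unfolding Mt_def by blast
  qed
  have Mt_ref: "refines Mt CC" unfolding refines_def Mt_def by blast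
  have Mt_notP: "Mt \<noteq> {P}"
  proof
    assume "Mt = {P}"
    then have "P \<in> Mt" by blast
    then obtain C x where Cx: "C \<in> CC" "x \<in> C" "P = C \<inter> orb N x" unfolding Mt_def by blast
    then have "C = P" using CC_sub[OF Cx(1)] by blast
    then show False using CC_eq_single[OF Cx(1)] by simp
  qed
  have Mt_single: "Mt = (\<lambda>x. {x}) ` P"
  proof (rule ccontr)
    assume ns: "Mt \<noteq> (\<lambda>x. {x}) ` P"
    have nt: "nontrivial_partition P Mt"
      unfolding nontrivial_partition_def using Mt_part Mt_notP ns by blast
    have MtC: "Mt = CC" using minC Mt_inv nt Mt_ref unfolding minimal_partition_def by blast
    have CsubO: "C \<subseteq> orb N x" if C: "C \<in> CC" and x: "x \<in> C" for C x
    proof -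
      have "C \<inter> orb N x \<in> CC" using MtC C x unfolding Mt_def by blast
      moreover have xP: "x \<in> P" using CC_sub[OF C] x by blast
      ultimately have "C \<inter> orb N x = C" using CC_disj[OF _ C _ x] orb_self[OF Ns xP] x by blast
      then show ?thesis by blast
    qed
    have Dref: "refines CC ?D"
      unfolding refines_def
    proof
      fix C assume C: "C \<in> CC"
      obtain z where z: "z \<in> C" using CC_ne[OF C] by blast
      have "z \<in> P" using CC_sub[OF C] z by blast
      then show "\<exists>B\<in>?D. C \<subseteq> B" using CsubO[OF C z] by blast
    qed
    have DnotP: "?D \<noteq> {P}"
    proof
      assume DP: "?D = {P}"
      have "transitive_on N P"
        unfolding transitive_on_def
      proof (intro ballI)
        fix x y assume x: "x \<in> P" and y: "y \<in> P"
        have "orb N x = P" using DP x by blast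
        then have "y \<in> orb N x" using y by simp
        then show "\<exists>h\<in>N. h x = y" unfolding orb_def by blast
      qed
      then show False using Nt by simp
    qed
    have Dnotsing: "?D \<noteq> (\<lambda>x. {x}) ` P"
    proof
      assume eq: "?D = (\<lambda>x. {x}) ` P"
      have "h = \<one>\<^bsub>SP\<^esub>" if h: "h \<in> N" for h
      proof (rule BG_eqI[OF sub_mem[OF Ns h] BG.one_closed])
        fix x assume x: "x \<in> P"
        have "orb N x \<in> (\<lambda>x. {x}) ` P" using eq x by blast
        then obtain y where "orb N x = {y}" by blast
        moreover have "x \<in> orb N x" "h x \<in> orb N x" using orb_self[OF Ns x] h unfolding orb_def by auto
        ultimately have "h x = x" by (metis singletonD)
        then show "h x = \<one>\<^bsub>SP\<^esub> x" using BG_one_apply[OF x] by simp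
      qed
      then have "N \<subseteq> {\<one>\<^bsub>SP\<^esub>}" by blast
      then show False using N1 oneN by blast
    qed
    have ntD: "nontrivial_partition P ?D"
      unfolding nontrivial_partition_def using Dinv DnotP Dnotsing unfolding invariant_partition_def by blast
    have DC: "?D = CC" using maxC Dinv ntD Dref unfolding maximal_partition_def by blast
    have "N \<subseteq> KK"
    proof
      fix n assume n: "n \<in> N"
      show "n \<in> KK"
      proof (rule K_char)
        show "n \<in> G" using n NG by blast
        fix C z assume C: "C \<in> CC" and z: "z \<in> C"
        have zP: "z \<in> P" using CC_sub[OF C] z by blast
        have "orb N z \<in> CC" using DC zP by blast
        then have "orb N z = C" using CC_disj[OF _ C orb_self[OF Ns zP] z] by blast
        moreover have "n z \<in> orb N z" unfolding orb_def using n by blast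
        ultimately show "n z \<in> C" by simp
      qed
    qed
    then show False using N_not_K by simp
  qed
  have meet1: "C \<inter> orb N x = {x}" if C: "C \<in> CC" and x: "x \<in> C" for C x
  proof -
    have "C \<inter> orb N x \<in> Mt" unfolding Mt_def using C x by blast
    then obtain z where "C \<inter> orb N x = {z}" using Mt_single by blast
    moreover have "x \<in> C \<inter> orb N x" using x orb_self[OF Ns] CC_sub[OF C] by blast
    ultimately show ?thesis by (metis singletonD)
  qed
  have meets: "\<exists>x\<in>C. orb N y = orb N x" if C: "C \<in> CC" and y: "y \<in> P" for C y
  proof -
    obtain n where n: "n \<in> N" "n y \<in> C" using Ntrans[OF y C] by blast
    have "n y \<in> orb N y" unfolding orb_def using n(1) by blast
    then have "orb N (n y) = orb N y" using orb_eq[OF Ns y] by blast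
    then show ?thesis using n(2) by metis
  qed
  have inter1: "card (C \<inter> A) = 1" if C: "C \<in> CC" and A: "A \<in> ?D" for C A
  proof -
    obtain y where y: "y \<in> P" "A = orb N y" using A by blast
    obtain x where x: "x \<in> C" "orb N y = orb N x" using meets[OF C y(1)] by blast
    show ?thesis using meet1[OF C x(1)] x y by simp
  qed
  have cardD: "card ?D = card C" if C: "C \<in> CC" for C
  proof -
    have "bij_betw (orb N) C ?D"
      unfolding bij_betw_def
    proof
      show "inj_on (orb N) C"
      proof (rule inj_onI)
        fix x x' assume x: "x \<in> C" and x': "x' \<in> C" and eq: "orb N x = orb N x'"
        have x'P: "x' \<in> P" using CC_sub[OF C] x' by blast
        have "x' \<in> C \<inter> orb N x" using x' eq orb_self[OF Ns x'P] by blast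
        then show "x = x'" using meet1[OF C x] by (metis IntI singletonD)
      qed
      show "orb N ` C = ?D"
      proof
        show "orb N ` C \<subseteq> ?D" using CC_sub[OF C] by blast
        show "?D \<subseteq> orb N ` C"
        proof
          fix A assume "A \<in> ?D"
          then obtain y where y: "y \<in> P" "A = orb N y" by blast
          obtain x where x: "x \<in> C" "orb N y = orb N x" using meets[OF C y(1)] by blast
          then show "A \<in> orb N ` C" using y by blast
        qed
      qed
    qed
    then show ?thesis by (metis bij_betw_same_card)
  qed
  have cardA: "card A = card CC" if A: "A \<in> ?D" for A
  proof -
    obtain y where y: "y \<in> P" "A = orb N y" using A by blast
    define cls where "cls z = (SOME C. C \<in> CC \<and> z \<in> C)" for z
    have cls: "cls z \<in> CC \<and> z \<in> cls z" if "z \<in> P" for z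
      unfolding cls_def using CC_cover[OF that] by (rule someI2_bex) blast
    have "bij_betw cls A CC"
      unfolding bij_betw_def
    proof
      have AP: "A \<subseteq> P" using orb_sub[OF Ns y(1)] y(2) by simp
      show "inj_on cls A"
      proof (rule inj_onI)
        fix z z' assume z: "z \<in> A" and z': "z' \<in> A" and eq: "cls z = cls z'"
        have zP: "z \<in> P" and z'P: "z' \<in> P" using z z' AP by blast+
        have c1: "cls z \<in> CC" "z \<in> cls z" using cls[OF zP] by blast+
        have "z' \<in> cls z" using cls[OF z'P] eq by simp
        moreover have "orb N z = A" using orb_eq[OF Ns y(1)] z y(2) by simp
        ultimately have "z' \<in> cls z \<inter> orb N z" using z' by simp
        then show "z = z'" using meet1[OF c1] by (metis singletonD)
      qed
      show "cls ` A = CC"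
      proof
        show "cls ` A \<subseteq> CC" using cls AP by blast
        show "CC \<subseteq> cls ` A"
        proof
          fix C assume C: "C \<in> CC"
          obtain x where x: "x \<in> C" "orb N y = orb N x" using meets[OF C y(1)] by blast
          have xP: "x \<in> P" using CC_sub[OF C] x(1) by blast
          have xA: "x \<in> A" using y(2) x(2) orb_self[OF Ns xP] by simp
          have "cls x = C" using cls[OF xP] CC_disj[OF _ C _ x(1)] by blast
          then show "C \<in> cls ` A" using xA by blast
        qed
      qed
    qed
    then show ?thesis by (metis bij_betw_same_card)
  qed
  have Dnorm: "normal_partition P G ?D"
    unfolding normal_partition_def
  proof (intro conjI ballI)
    show "invariant_partition P G ?D" by (rule Dinv)
    fix A x z assume A: "A \<in> ?D" and x: "x \<in> A" and z: "z \<in> A"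
    obtain y where y: "y \<in> P" "A = orb N y" using A by blast
    have xP: "x \<in> P" using orb_sub[OF Ns y(1)] x y(2) by blast
    have "orb N x = A" using orb_eq[OF Ns y(1)] x y(2) by simp
    then obtain n where n: "n \<in> N" "n x = z" using z unfolding orb_def by blast
    have "n \<in> kernel_on G ?D"
      unfolding kernel_on_def
    proof (intro CollectI conjI ballI)
      show "n \<in> G" using n(1) NG by blast
      fix B assume "B \<in> ?D"
      then obtain w where "w \<in> P" "B = orb N w" by blast
      then show "n ` B = B" using orb_stable[OF Ns n(1)] by simp
    qed
    then show "\<exists>g\<in>kernel_on G ?D. g x = z" using n(2) by blast
  qed
  show ?thesis using Dnorm cardD cardA inter1 by blast
qed

end


context setting begin

lemma part_a:
  "(centraliser P G Soc \<inter> KK = {\<one>\<^bsub>SP\<^esub>} \<and> \<not> abelian_set P Soc)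
   \<or> (centraliser P G Soc \<inter> KK = Soc \<and> elementary_abelian P Soc)"
proof -
  define W where "W = centraliser P G Soc \<inter> KK"
  have Winv: "invsub SP G W" unfolding W_def using centr_invsub[OF Soc_invsub] .
  have WK: "W \<subseteq> KK" unfolding W_def by blast
  have Wchar: "w \<in> W \<longleftrightarrow> w \<in> KK \<and> (\<forall>h\<in>Soc. w \<otimes>\<^bsub>SP\<^esub> h = h \<otimes>\<^bsub>SP\<^esub> w)" for w
    unfolding W_def centraliser_def using K_sub_G by blast
  have SK: "Soc \<subseteq> KK" by (rule Soc_sub_K)
  have oneS: "\<one>\<^bsub>SP\<^esub> \<in> Soc" using Soc_invsub unfolding invsub_def by (blast intro: subgroup.one_closed)
  show ?thesis
  proof (cases "W = {\<one>\<^bsub>SP\<^esub>}")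
    case True
    have "\<not> abelian_set P Soc"
    proof
      assume ab: "abelian_set P Soc"
      have "Soc \<subseteq> W"
      proof
        fix s assume s: "s \<in> Soc"
        have "s \<in> KK" using s SK by blast
        moreover have "\<forall>h\<in>Soc. s \<otimes>\<^bsub>SP\<^esub> h = h \<otimes>\<^bsub>SP\<^esub> s" using ab s unfolding abelian_set_def by blast
        ultimately show "s \<in> W" using Wchar[of s] by blast
      qed
      then have "Soc = {\<one>\<^bsub>SP\<^esub>}" using True oneS by blast
      then show False using Soc_nontriv by simp
    qed
    then show ?thesis using True unfolding W_def by blast
  next
    case False
    have Wtr: "\<forall>C\<in>CC. \<forall>x\<in>C. \<forall>y\<in>C. \<exists>h\<in>W. h x = y" using dichotomy[OF Winv WK] False by blast
    obtain T where T: "mininv SP KK W T" using BG.mininv_exists[OF finSP invsub_G_K[OF Winv] False] by blast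
    have TK: "mininv SP KK KK T" using T WK unfolding mininv_def by blast
    have TS: "T \<subseteq> Soc" using mininv_sub_Soc[OF TK] .
    have TW: "T \<subseteq> W" using T unfolding mininv_def by blast
    define Z where "Z = Soc \<inter> W"
    have Zinv: "invsub SP G Z" unfolding Z_def using BG.invsub_Int[OF Soc_invsub Winv] .
    have ZK: "Z \<subseteq> KK" unfolding Z_def using WK by blast
    have "\<one>\<^bsub>SP\<^esub> \<in> T" using T unfolding mininv_def invsub_def by (blast intro: subgroup.one_closed)
    moreover have "T \<noteq> {\<one>\<^bsub>SP\<^esub>}" using T unfolding mininv_def by blast
    ultimately obtain t where t: "t \<in> T" "t \<noteq> \<one>\<^bsub>SP\<^esub>" by blast
    have "t \<in> Z" unfolding Z_def using t TS TW by blast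
    then have Znt: "Z \<noteq> {\<one>\<^bsub>SP\<^esub>}" using t by blast
    have Ztr: "\<forall>C\<in>CC. \<forall>x\<in>C. \<forall>y\<in>C. \<exists>h\<in>Z. h x = y" using dichotomy[OF Zinv ZK] Znt by blast
    have Zcomm: "a \<otimes>\<^bsub>SP\<^esub> b = b \<otimes>\<^bsub>SP\<^esub> a" if a: "a \<in> Z" and b: "b \<in> Z" for a b
    proof -
      have "a \<in> W" "b \<in> Soc" using a b unfolding Z_def by blast+
      then show ?thesis using Wchar[of a] by blast
    qed
    have Sag: "\<exists>z\<in>Z. \<forall>x\<in>C. s x = z x" if s: "s \<in> Soc" and C: "C \<in> CC" for s C
    proof (rule agree[OF ZK _ C _ _])
      show "\<And>a b. a \<in> Z \<Longrightarrow> b \<in> Z \<Longrightarrow> a \<otimes>\<^bsub>SP\<^esub> b = b \<otimes>\<^bsub>SP\<^esub> a" using Zcomm by blast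
      show "\<And>x y. x \<in> C \<Longrightarrow> y \<in> C \<Longrightarrow> \<exists>a\<in>Z. a x = y" using Ztr C by blast
      show "s \<in> KK" using s SK by blast
      fix a assume "a \<in> Z"
      then have "a \<in> W" unfolding Z_def by blast
      then have "a \<otimes>\<^bsub>SP\<^esub> s = s \<otimes>\<^bsub>SP\<^esub> a" using Wchar[of a] s by blast
      then show "s \<otimes>\<^bsub>SP\<^esub> a = a \<otimes>\<^bsub>SP\<^esub> s" by simp
    qed
    have Wag: "\<exists>z\<in>Z. \<forall>x\<in>C. w x = z x" if w: "w \<in> W" and C: "C \<in> CC" for w C
    proof (rule agree[OF ZK _ C _ _])
      show "\<And>a b. a \<in> Z \<Longrightarrow> b \<in> Z \<Longrightarrow> a \<otimes>\<^bsub>SP\<^esub> b = b \<otimes>\<^bsub>SP\<^esub> a" using Zcomm by blast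
      show "\<And>x y. x \<in> C \<Longrightarrow> y \<in> C \<Longrightarrow> \<exists>a\<in>Z. a x = y" using Ztr C by blast
      show "w \<in> KK" using w WK by blast
      fix a assume "a \<in> Z"
      then have "a \<in> Soc" unfolding Z_def by blast
      then show "w \<otimes>\<^bsub>SP\<^esub> a = a \<otimes>\<^bsub>SP\<^esub> w" using Wchar[of w] w by blast
    qed
    have Sab: "a \<otimes>\<^bsub>SP\<^esub> b = b \<otimes>\<^bsub>SP\<^esub> a" if a: "a \<in> Soc" and b: "b \<in> Soc" for a b
      using abelian_from_agree[OF SK ZK Zcomm Sag a b] by blast
    have Wab: "a \<otimes>\<^bsub>SP\<^esub> b = b \<otimes>\<^bsub>SP\<^esub> a" if a: "a \<in> W" and b: "b \<in> W" for a b
      using abelian_from_agree[OF WK ZK Zcomm Wag a b] by blast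
    have SW: "Soc \<subseteq> W"
    proof
      fix s assume s: "s \<in> Soc"
      have "s \<in> KK" using s SK by blast
      moreover have "\<forall>h\<in>Soc. s \<otimes>\<^bsub>SP\<^esub> h = h \<otimes>\<^bsub>SP\<^esub> s" using Sab s by blast
      ultimately show "s \<in> W" using Wchar[of s] by blast
    qed
    have WS: "W \<subseteq> Soc"
    proof (rule W_sub_Soc[OF _ invsub_G_K[OF Winv] WK])
      show "\<And>a b. a \<in> Soc \<Longrightarrow> b \<in> Soc \<Longrightarrow> a \<otimes>\<^bsub>SP\<^esub> b = b \<otimes>\<^bsub>SP\<^esub> a" using Sab by blast
      fix w C assume w: "w \<in> W" and C: "C \<in> CC"
      obtain z where "z \<in> Z" "\<forall>x\<in>C. w x = z x" using Wag[OF w C] by blast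
      then show "\<exists>s\<in>Soc. \<forall>x\<in>C. w x = s x" unfolding Z_def by blast
    qed
    have WeqS: "W = Soc" using SW WS by blast
    obtain p where p: "Factorial_Ring.prime (p::nat)" "\<forall>x\<in>W. x [^]\<^bsub>SP\<^esub> p = \<one>\<^bsub>SP\<^esub>"
      using elem_ab[OF Winv WK Wab False] by blast
    have "elementary_abelian P Soc"
      unfolding elementary_abelian_def abelian_set_def using Sab p WeqS by blast
    then show ?thesis using WeqS unfolding W_def by blast
  qed
qed

lemma part_b:
  "centraliser P G KK \<inter> KK = {\<one>\<^bsub>SP\<^esub>}
   \<or> (centraliser P G KK \<inter> KK = KK \<and> KK = Soc \<and> elementary_abelian P Soc)"
proof -
  define Z where "Z = centraliser P G KK \<inter> KK"
  have Zinv: "invsub SP G Z" unfolding Z_def using centr_invsub[OF K_invsub] .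
  have ZK: "Z \<subseteq> KK" unfolding Z_def by blast
  have Zchar: "z \<in> Z \<longleftrightarrow> z \<in> KK \<and> (\<forall>h\<in>KK. z \<otimes>\<^bsub>SP\<^esub> h = h \<otimes>\<^bsub>SP\<^esub> z)" for z
    unfolding Z_def centraliser_def using K_sub_G by blast
  show ?thesis
  proof (cases "Z = {\<one>\<^bsub>SP\<^esub>}")
    case True then show ?thesis unfolding Z_def by blast
  next
    case False
    have Ztr: "\<forall>C\<in>CC. \<forall>x\<in>C. \<forall>y\<in>C. \<exists>h\<in>Z. h x = y" using dichotomy[OF Zinv ZK] False by blast
    have Zcomm: "a \<otimes>\<^bsub>SP\<^esub> b = b \<otimes>\<^bsub>SP\<^esub> a" if a: "a \<in> Z" and b: "b \<in> Z" for a b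
    proof -
      have "b \<in> KK" using b ZK by blast
      then show ?thesis using Zchar[of a] a by blast
    qed
    have Kag: "\<exists>z\<in>Z. \<forall>x\<in>C. k x = z x" if k: "k \<in> KK" and C: "C \<in> CC" for k C
    proof (rule agree[OF ZK _ C _ k])
      show "\<And>a b. a \<in> Z \<Longrightarrow> b \<in> Z \<Longrightarrow> a \<otimes>\<^bsub>SP\<^esub> b = b \<otimes>\<^bsub>SP\<^esub> a" using Zcomm by blast
      show "\<And>x y. x \<in> C \<Longrightarrow> y \<in> C \<Longrightarrow> \<exists>a\<in>Z. a x = y" using Ztr C by blast
      fix a assume "a \<in> Z"
      then have "a \<otimes>\<^bsub>SP\<^esub> k = k \<otimes>\<^bsub>SP\<^esub> a" using Zchar[of a] k by blast
      then show "k \<otimes>\<^bsub>SP\<^esub> a = a \<otimes>\<^bsub>SP\<^esub> k" by simp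
    qed
    have Kab: "a \<otimes>\<^bsub>SP\<^esub> b = b \<otimes>\<^bsub>SP\<^esub> a" if a: "a \<in> KK" and b: "b \<in> KK" for a b
      using abelian_from_agree[OF subset_refl ZK Zcomm Kag a b] by blast
    have ZeqK: "Z = KK"
    proof
      show "Z \<subseteq> KK" by (rule ZK)
      show "KK \<subseteq> Z"
      proof
        fix k assume k: "k \<in> KK"
        then have "\<forall>h\<in>KK. k \<otimes>\<^bsub>SP\<^esub> h = h \<otimes>\<^bsub>SP\<^esub> k" using Kab by blast
        then show "k \<in> Z" using Zchar[of k] k by blast
      qed
    qed
    obtain p where p: "Factorial_Ring.prime (p::nat)" "\<forall>x\<in>KK. x [^]\<^bsub>SP\<^esub> p = \<one>\<^bsub>SP\<^esub>"
      using elem_ab[OF K_invsub subset_refl Kab K_nontriv] by blast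
    have KS: "KK = Soc" using K_sub_Soc[OF Kab p] Soc_sub_K by blast
    have "elementary_abelian P Soc"
      unfolding elementary_abelian_def abelian_set_def using Kab p KS by blast
    then show ?thesis using ZeqK KS unfolding Z_def by blast
  qed
qed

end


theorem lemma8p2:
  fixes P :: "'a set" and L :: "'a set set" and G :: "('a \<Rightarrow> 'a) set"
    and \<C> :: "'a set set" and v k c d :: nat
  assumes lin: "linear_space P L"
    and v: "card P = v"
    and k: "\<forall>l\<in>L. card l = k"
    and kv: "2 < k" "k < v"
    and aut: "aut_group P L G"
    and lt: "line_transitive L G"
    and nt: "nontrivial_partition P \<C>"
    and inv: "invariant_partition P G \<C>"
    and dC: "card \<C> = d"
    and cC: "\<forall>XK\<in>\<C>. card XK = c"
    and norm: "normal_partition P G \<C>"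
    and mini: "minimal_partition P G \<C>"
  defines "K \<equiv> kernel_on G \<C>"
    and "S \<equiv> socle P (kernel_on G \<C>)"
    and "XK \<equiv> centraliser P G (kernel_on G \<C>)"
    and "YS \<equiv> centraliser P G (socle P (kernel_on G \<C>))"
  shows "((YS \<inter> K = {\<one>\<^bsub>Sym P\<^esub>} \<and> \<not> abelian_set P S)
            \<or> (YS \<inter> K = S \<and> elementary_abelian P S))
       \<and> (XK \<inter> K = {\<one>\<^bsub>Sym P\<^esub>} \<or> (XK \<inter> K = K \<and> K = S \<and> elementary_abelian P S))
       \<and> ((maximal_partition P G \<C> \<and>
            (\<exists>N. N \<lhd> subgrp P G \<and> N \<noteq> {\<one>\<^bsub>Sym P\<^esub>} \<and> \<not> transitive_on N P
                 \<and> N \<inter> S = {\<one>\<^bsub>Sym P\<^esub>}))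
          \<longrightarrow> (\<exists>\<C>'. normal_partition P G \<C>' \<and> card \<C>' = c \<and> (\<forall>A'\<in>\<C>'. card A' = d)
                  \<and> (\<forall>C\<in>\<C>. \<forall>C'\<in>\<C>'. card (C \<inter> C') = 1)))"
proof -
  have finP: "finite P" using lin unfolding linear_space_def by blast
  have subG: "subgroup G (BijGroup P)" using aut unfolding aut_group_def by blast
  interpret setting P G \<C>
    using finP subG nt inv norm mini by (simp add: setting_def)
  show ?thesis
    unfolding K_def S_def XK_def YS_def Soc_eq
  proof (intro conjI impI)
    show "centraliser P G Soc \<inter> KK = {\<one>\<^bsub>SP\<^esub>} \<and> \<not> abelian_set P Soc
          \<or> centraliser P G Soc \<inter> KK = Soc \<and> elementary_abelian P Soc"
      by (rule part_a)
    show "centraliser P G KK \<inter> KK = {\<one>\<^bsub>SP\<^esub>}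
          \<or> centraliser P G KK \<inter> KK = KK \<and> KK = Soc \<and> elementary_abelian P Soc"
      by (rule part_b)
  next
    assume H: "maximal_partition P G \<C> \<and>
      (\<exists>N. N \<lhd> subgrp P G \<and> N \<noteq> {\<one>\<^bsub>SP\<^esub>} \<and> \<not> transitive_on N P \<and> N \<inter> Soc = {\<one>\<^bsub>SP\<^esub>})"
    then obtain N where N: "N \<lhd> subgrp P G" "N \<noteq> {\<one>\<^bsub>SP\<^esub>}" "\<not> transitive_on N P" "N \<inter> Soc = {\<one>\<^bsub>SP\<^esub>}"
      by blast
    obtain D where D: "normal_partition P G D" "\<forall>C\<in>\<C>. card D = card C" "\<forall>A\<in>D. card A = card \<C>"
      "\<forall>C\<in>\<C>. \<forall>A\<in>D. card (C \<inter> A) = 1"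
      using part_c[OF conjunct1[OF H] N] by blast
    obtain C0 where C0: "C0 \<in> \<C>" using exists_pair by blast
    have "card D = card C0" using D(2) C0 by blast
    moreover have "card C0 = c" using cC C0 by blast
    ultimately have "card D = c" by simp
    moreover have "\<forall>A\<in>D. card A = d" using D(3) dC by simp
    ultimately show "\<exists>\<C>'. normal_partition P G \<C>' \<and> card \<C>' = c \<and> (\<forall>A'\<in>\<C>'. card A' = d)
                  \<and> (\<forall>C\<in>\<C>. \<forall>C'\<in>\<C>'. card (C \<inter> C') = 1)"
      using D(1) D(4) by blast
  qed
qed

end
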